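(* Let $K$ be an unconstrained Sierpinski carpet, $d$ the Euclidean metric and $d_G$ the geodesic metric on $K$. There exists $C\in(0,\infty)$ depending only on $K$ such that $d(x,y)\le d_G(x,y)\le C\,d(x,y)$ for every $x,y\in K$.
   Context: USC: integers $k\ge3$, $4(k-1)\le N\le k^2-1$; maps $\Psi_i(x)=x/k+c_i$ on $\square=[0,1]^2$ with pairwise intersections of the $\Psi_i(\square)$ a segment, point or empty, $\bigcup_i\Psi_i(\square)$ connected and invariant under the 8 isometries of $\square$, $[0,1]\times\{0\}\subset\bigcup_i\Psi_i(\square)\subset\square$; $K=\bigcup_i\Psi_iK$. $d_G(x,y)$ is the infimum of lengths of rectifiable curves $\gamma:[0,1]\to K$ with $\gamma(0)=x$, $\gamma(1)=y$. *)

theory Defs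
  imports "HOL-Analysis.Analysis"
begin

type_synonym pt = "real \<times> real"

definition unit_square :: "pt set" where
  "unit_square = {0..1} \<times> {0..1}"

definition usc_map :: "nat \<Rightarrow> (nat \<Rightarrow> pt) \<Rightarrow> nat \<Rightarrow> pt \<Rightarrow> pt" where
  "usc_map k c i x = scaleR (1 / real k) x + c i"

definition square_isometries :: "(pt \<Rightarrow> pt) set" where
  "square_isometries =
    {(\<lambda>(x,y). (x,y)), (\<lambda>(x,y). (1-x,y)), (\<lambda>(x,y). (x,1-y)), (\<lambda>(x,y). (1-x,1-y)),
     (\<lambda>(x,y). (y,x)), (\<lambda>(x,y). (1-y,x)), (\<lambda>(x,y). (y,1-x)), (\<lambda>(x,y). (1-y,1-x))}"

definition is_segment :: "pt set \<Rightarrow> bool" where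
  "is_segment S \<longleftrightarrow> (\<exists>a b. a \<noteq> b \<and> S = closed_segment a b)"

text \<open>Unconstrained Sierpinski carpet data: k, N, translation vectors c_0..c_(N-1),
  and the attractor K (the unique nonempty compact set with K = U_i Psi_i(K)).\<close>
definition USC :: "nat \<Rightarrow> nat \<Rightarrow> (nat \<Rightarrow> pt) \<Rightarrow> pt set \<Rightarrow> bool" where
  "USC k N c K \<longleftrightarrow>
     k \<ge> 3 \<and> 4 * (k - 1) \<le> N \<and> N \<le> k^2 - 1 \<and>
     (\<forall>i<N. \<forall>j<N. i \<noteq> j \<longrightarrow>
        (let S = usc_map k c i ` unit_square \<inter> usc_map k c j ` unit_square
         in is_segment S \<or> (\<exists>p. S = {p}) \<or> S = {})) \<and>
     connected (\<Union>i<N. usc_map k c i ` unit_square) \<and>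
     (\<forall>g\<in>square_isometries. g ` (\<Union>i<N. usc_map k c i ` unit_square) = (\<Union>i<N. usc_map k c i ` unit_square)) \<and>
     {0..1} \<times> {0} \<subseteq> (\<Union>i<N. usc_map k c i ` unit_square) \<and>
     (\<Union>i<N. usc_map k c i ` unit_square) \<subseteq> unit_square \<and>
     compact K \<and> K \<noteq> {} \<and> K = (\<Union>i<N. usc_map k c i ` K)"

definition curve_length :: "(real \<Rightarrow> pt) \<Rightarrow> ereal" where
  "curve_length \<gamma> =
     (SUP p \<in> {(n, t). t 0 = 0 \<and> t n = (1::real) \<and> (\<forall>i<n. t i \<le> t (Suc i))}.
        ereal (\<Sum>i<fst p. dist (\<gamma> (snd p i)) (\<gamma> (snd p (Suc i)))))"

definition rectifiable_curve :: "(real \<Rightarrow> pt) \<Rightarrow> bool" where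
  "rectifiable_curve \<gamma> \<longleftrightarrow> path \<gamma> \<and> curve_length \<gamma> < \<infinity>"

text \<open>Geodesic (intrinsic) metric on K; infimum over the empty set is +infinity.\<close>
definition geodesic_dist :: "pt set \<Rightarrow> pt \<Rightarrow> pt \<Rightarrow> ereal" where
  "geodesic_dist K x y =
     (INF \<gamma> \<in> {\<gamma>. rectifiable_curve \<gamma> \<and> path_image \<gamma> \<subseteq> K \<and> pathstart \<gamma> = x \<and> pathfinish \<gamma> = y}.
        curve_length \<gamma>)"

end

theory Submission
  imports Defs
begin



definition lpc :: "pt set \<Rightarrow> real \<Rightarrow> pt \<Rightarrow> pt \<Rightarrow> bool" where
  "lpc K L x y \<longleftrightarrow> (\<exists>g::real\<Rightarrow>pt. L-lipschitz_on {0..1} g \<and> g 0 = x \<and> g 1 = y \<and> g ` {0..1} \<subseteq> K)"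

lemma chain_mono:
  fixes t :: "nat \<Rightarrow> real"
  assumes "\<forall>i<n. t i \<le> t (Suc i)" "i \<le> j" "j \<le> n"
  shows "t i \<le> t j"
  using assms(2,3)
proof (induction j)
  case 0 then show ?case by simp
next
  case (Suc j)
  show ?case
  proof (cases "i = Suc j")
    case True then show ?thesis by simp
  next
    case False
    then have "t i \<le> t j" using Suc by simp
    also have "t j \<le> t (Suc j)" using assms(1) Suc.prems by simp
    finally show ?thesis .
  qed
qed

lemma lip_curve_length:
  assumes L: "L-lipschitz_on {0..1} g"
  shows "curve_length g \<le> ereal L"
  unfolding curve_length_def
proof (rule SUP_least, clarify)
  fix n and t :: "nat \<Rightarrow> real"
  assume t0: "t 0 = 0" and tn: "t n = 1" and mono: "\<forall>i<n. t i \<le> t (Suc i)"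
  have rng: "t i \<in> {0..1}" if "i \<le> n" for i
    using chain_mono[OF mono, of 0 i] chain_mono[OF mono, of i n] that t0 tn by auto
  have "(\<Sum>i<n. dist (g (t i)) (g (t (Suc i)))) \<le> (\<Sum>i<n. L * (t (Suc i) - t i))"
  proof (rule sum_mono)
    fix i assume "i \<in> {..<n}"
    then have "dist (g (t i)) (g (t (Suc i))) \<le> L * dist (t i) (t (Suc i))"
      using rng[of i] rng[of "Suc i"] by (intro lipschitz_onD[OF L]) auto
    also have "dist (t i) (t (Suc i)) = t (Suc i) - t i"
      using mono \<open>i \<in> {..<n}\<close> by (auto simp: dist_real_def)
    finally show "dist (g (t i)) (g (t (Suc i))) \<le> L * (t (Suc i) - t i)" .
  qed
  also have "\<dots> = L * (\<Sum>i<n. (t (Suc i) - t i))" by (simp add: sum_distrib_left)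
  also have "(\<Sum>i<n. (t (Suc i) - t i)) = t n - t 0" by (rule sum_lessThan_telescope)
  finally show "ereal (\<Sum>i<fst (n, t). dist (g (snd (n, t) i)) (g (snd (n, t) (Suc i)))) \<le> ereal L"
    using t0 tn by simp
qed

lemma LP_geo:
  assumes "lpc K L x y"
  shows "geodesic_dist K x y \<le> ereal L"
proof -
  obtain g :: "real \<Rightarrow> pt" where g: "L-lipschitz_on {0..1} g" "g 0 = x" "g 1 = y" "g ` {0..1} \<subseteq> K"
    using assms unfolding lpc_def by blast
  have cl: "curve_length g \<le> ereal L" by (rule lip_curve_length[OF g(1)])
  have "path g" unfolding path_def by (rule lipschitz_on_continuous_on[OF g(1)])
  moreover have "curve_length g < \<infinity>" by (rule le_less_trans[OF cl]) simp
  ultimately have "rectifiable_curve g" by (simp add: rectifiable_curve_def)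
  then have "geodesic_dist K x y \<le> curve_length g"
    unfolding geodesic_dist_def using g
    by (intro INF_lower) (simp add: path_image_def pathstart_def pathfinish_def)
  with cl show ?thesis by simp
qed

lemma geo_lower:
  shows "ereal (dist x y) \<le> geodesic_dist K x y"
  unfolding geodesic_dist_def
proof (rule INF_greatest)
  fix g assume "g \<in> {\<gamma>. rectifiable_curve \<gamma> \<and> path_image \<gamma> \<subseteq> K \<and> pathstart \<gamma> = x \<and> pathfinish \<gamma> = y}"
  then have gx: "pathstart g = x" "pathfinish g = y" by auto
  let ?t = "\<lambda>i::nat. if i = 0 then 0 else (1::real)"
  have "(1::nat, ?t) \<in> {(n, t). t 0 = 0 \<and> t n = (1::real) \<and> (\<forall>i<n. t i \<le> t (Suc i))}"
    by auto
  then have "ereal (\<Sum>i<fst (1::nat, ?t). dist (g (snd (1::nat, ?t) i)) (g (snd (1::nat, ?t) (Suc i))))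
      \<le> curve_length g"
    unfolding curve_length_def by (rule SUP_upper)
  then show "ereal (dist x y) \<le> curve_length g"
    using gx by (simp add: pathstart_def pathfinish_def)
qed

lemma lpc_nonneg: "lpc K L x y \<Longrightarrow> 0 \<le> L"
  unfolding lpc_def using lipschitz_on_nonneg by blast

lemma lpc_mem: assumes "lpc K L x y" shows "x \<in> K" "y \<in> K"
  using assms unfolding lpc_def by force+

lemma lpc_dist: assumes "lpc K L x y" shows "dist x y \<le> L"
proof -
  obtain g :: "real \<Rightarrow> pt" where g: "L-lipschitz_on {0..1} g" "g 0 = x" "g 1 = y"
    using assms unfolding lpc_def by blast
  have "dist (g 0) (g 1) \<le> L * dist (0::real) 1" by (rule lipschitz_onD[OF g(1)]) auto
  then show ?thesis using g by simp
qed

lemma lpc_refl: "x \<in> K \<Longrightarrow> lpc K 0 x x"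
  unfolding lpc_def by (intro exI[of _ "\<lambda>_. x"]) (auto intro: lipschitz_on_constant)

lemma lpc_mono: "lpc K L x y \<Longrightarrow> L \<le> L' \<Longrightarrow> lpc K L' x y"
  unfolding lpc_def using lipschitz_on_le by blast

lemma lpc_sym: assumes "lpc K L x y" shows "lpc K L y x"
proof -
  obtain g :: "real \<Rightarrow> pt" where g: "L-lipschitz_on {0..1} g" "g 0 = x" "g 1 = y" "g ` {0..1} \<subseteq> K"
    using assms unfolding lpc_def by blast
  have "L-lipschitz_on {0..1} (\<lambda>t. g (1 - t))"
  proof (rule lipschitz_onI)
    fix s t :: real assume "s \<in> {0..1}" "t \<in> {0..1}"
    then have "dist (g (1 - s)) (g (1 - t)) \<le> L * dist (1 - s) (1 - t)"
      by (intro lipschitz_onD[OF g(1)]) auto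
    then show "dist (g (1 - s)) (g (1 - t)) \<le> L * dist s t" by (simp add: dist_real_def abs_minus_commute)
  qed (rule lipschitz_on_nonneg[OF g(1)])
  moreover have "(\<lambda>t. g (1 - t)) ` {0..1} \<subseteq> K" using g(4) by auto
  ultimately show ?thesis unfolding lpc_def using g by (intro exI[of _ "\<lambda>t. g (1 - t)"]) auto
qed

lemma lip_reparam:
  fixes g :: "real \<Rightarrow> pt"
  assumes g: "L-lipschitz_on {0..1} g" and lh: "lo < hi"
  shows "(L / (hi - lo))-lipschitz_on {lo..hi} (\<lambda>t. g ((t - lo) / (hi - lo)))"
proof (rule lipschitz_onI)
  fix s t :: real assume st: "s \<in> {lo..hi}" "t \<in> {lo..hi}"
  have "dist (g ((s - lo) / (hi - lo))) (g ((t - lo) / (hi - lo))) \<le> L * dist ((s - lo) / (hi - lo)) ((t - lo) / (hi - lo))"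
    using st lh by (intro lipschitz_onD[OF g]) (auto simp: field_simps)
  also have "dist ((s - lo) / (hi - lo)) ((t - lo) / (hi - lo)) = dist s t / (hi - lo)"
    using lh by (simp add: dist_real_def diff_divide_distrib[symmetric] abs_divide)
  finally show "dist (g ((s - lo) / (hi - lo))) (g ((t - lo) / (hi - lo))) \<le> L / (hi - lo) * dist s t"
    by simp
qed (use lipschitz_on_nonneg[OF g] lh in \<open>auto intro: divide_nonneg_pos\<close>)

lemma lpc_trans: assumes xy: "lpc K a x y" and yz: "lpc K b y z" shows "lpc K (a + b) x z"
proof -
  have a0: "0 \<le> a" and b0: "0 \<le> b" using lpc_nonneg xy yz by auto
  show ?thesis
  proof (cases "a = 0")
    case True
    then have "x = y" using lpc_dist[OF xy] by simp
    then show ?thesis using yz True by simp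
  next
    case anz: False
    show ?thesis
    proof (cases "b = 0")
      case True
      then have "y = z" using lpc_dist[OF yz] by simp
      then show ?thesis using xy True by simp
    next
      case bnz: False
      obtain g :: "real \<Rightarrow> pt" where g: "a-lipschitz_on {0..1} g" "g 0 = x" "g 1 = y" "g ` {0..1} \<subseteq> K"
        using xy unfolding lpc_def by blast
      obtain h :: "real \<Rightarrow> pt" where h: "b-lipschitz_on {0..1} h" "h 0 = y" "h 1 = z" "h ` {0..1} \<subseteq> K"
        using yz unfolding lpc_def by blast
      define m where "m = a / (a + b)"
      have ab: "0 < a" "0 < b" using a0 b0 anz bnz by auto
      have m: "0 < m" "m < 1" using ab by (auto simp: m_def field_simps)
      have e1: "a / (m - 0) = a + b" using ab by (simp add: m_def field_simps)
      have e2: "b / (1 - m) = a + b" using ab by (simp add: m_def field_simps)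
      have L1: "(a + b)-lipschitz_on {0..m} (\<lambda>t. g ((t - 0) / (m - 0)))"
        using lip_reparam[OF g(1) m(1)] e1 by simp
      have L2: "(a + b)-lipschitz_on {m..1} (\<lambda>t. h ((t - m) / (1 - m)))"
        using lip_reparam[OF h(1) m(2)] e2 by simp
      have L: "(a + b)-lipschitz_on {0..1} (\<lambda>t. if t \<le> m then g ((t - 0) / (m - 0)) else h ((t - m) / (1 - m)))"
        by (rule lipschitz_on_concat[OF L1 L2]) (use m g h in simp)
      have img: "(\<lambda>t. if t \<le> m then g ((t - 0) / (m - 0)) else h ((t - m) / (1 - m))) ` {0..1} \<subseteq> K"
      proof (rule image_subsetI)
        fix t :: real assume t: "t \<in> {0..1}"
        show "(if t \<le> m then g ((t - 0) / (m - 0)) else h ((t - m) / (1 - m))) \<in> K"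
        proof (cases "t \<le> m")
          case True
          then have "(t - 0) / (m - 0) \<in> {0..1}" using t m by (auto simp: field_simps)
          then show ?thesis using True g(4) by auto
        next
          case False
          then have "(t - m) / (1 - m) \<in> {0..1}" using t m by (auto simp: field_simps)
          then show ?thesis using False h(4) by auto
        qed
      qed
      show ?thesis unfolding lpc_def
        by (rule exI, rule conjI[OF L]) (use img m g h in auto)
    qed
  qed
qed

lemma lpc_seg:
  assumes "closed_segment x y \<subseteq> K"
  shows "lpc K (dist x y) x y"
proof -
  have L: "(dist x y)-lipschitz_on {0..1} (linepath x y)"
  proof (rule lipschitz_onI)
    fix s t :: real
    have "linepath x y s - linepath x y t = (t - s) *\<^sub>R (x - y)"
      by (simp add: linepath_def algebra_simps)
    then show "dist (linepath x y s) (linepath x y t) \<le> dist x y * dist s t"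
      by (simp add: dist_norm dist_real_def abs_minus_commute)
  qed simp
  have "linepath x y ` {0..1} \<subseteq> K" using assms
    by (metis path_image_def path_image_linepath)
  then show ?thesis unfolding lpc_def using L
    by (intro exI[of _ "linepath x y"]) (auto simp: linepath_def)
qed

lemma lpc_map:
  assumes "lpc K L x y" and r: "0 \<le> r" and f: "\<And>u v. dist (f u) (f v) = r * dist u v"
    and fK: "f ` K \<subseteq> K'"
  shows "lpc K' (r * L) (f x) (f y)"
proof -
  obtain g :: "real \<Rightarrow> pt" where g: "L-lipschitz_on {0..1} g" "g 0 = x" "g 1 = y" "g ` {0..1} \<subseteq> K"
    using assms(1) unfolding lpc_def by blast
  have "(r * L)-lipschitz_on {0..1} (\<lambda>t. f (g t))"
  proof (rule lipschitz_onI)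
    fix s t :: real assume "s \<in> {0..1}" "t \<in> {0..1}"
    then have "dist (g s) (g t) \<le> L * dist s t" by (intro lipschitz_onD[OF g(1)])
    then show "dist (f (g s)) (f (g t)) \<le> r * L * dist s t"
      unfolding f using r by (metis mult.assoc mult_left_mono)
  qed (use r lipschitz_on_nonneg[OF g(1)] in simp)
  then show ?thesis unfolding lpc_def using g fK
    by (intro exI[of _ "\<lambda>t. f (g t)"]) auto
qed




lemma lpc_inf:
  fixes z :: "nat \<Rightarrow> pt" and a :: "nat \<Rightarrow> real"
  assumes K: "closed K" and step: "\<And>n. lpc K (a n) (z n) (z (Suc n))"
    and sa: "summable a" and lim: "z \<longlonglongrightarrow> w"
  shows "lpc K (suminf a) (z 0) w"
proof -
  have a0: "0 \<le> a n" for n using lpc_nonneg[OF step[of n]] .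
  define A where "A = suminf a"
  have A0: "0 \<le> A" unfolding A_def using suminf_nonneg[OF sa a0] .
  have z0K: "z 0 \<in> K" using lpc_mem(1)[OF step[of 0]] .
  show ?thesis
  proof (cases "A = 0")
    case True
    then have an: "a n = 0" for n using suminf_eq_zero_iff[OF sa a0] unfolding A_def by blast
    have zc: "z n = z 0" for n
    proof (induction n)
      case (Suc n) then show ?case using lpc_dist[OF step[of n]] an[of n] by simp
    qed simp
    have zf: "z = (\<lambda>n. z 0)" using zc by (simp add: fun_eq_iff)
    have "(\<lambda>n. z 0) \<longlonglongrightarrow> w" using lim by (subst zf[symmetric])
    then have "w = z 0" by (rule LIMSEQ_unique[OF _ tendsto_const])
    then show ?thesis using lpc_refl[OF z0K] True unfolding A_def by simp
  next
    case False
    then have Apos: "0 < A" using A0 by simp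
    define \<sigma> where "\<sigma> n = (\<Sum>m<n. a m) / A" for n
    have s0: "\<sigma> 0 = 0" by (simp add: \<sigma>_def)
    have sdiff: "\<sigma> (Suc n) - \<sigma> n = a n / A" for n by (simp add: \<sigma>_def diff_divide_distrib[symmetric])
    have smono: "\<sigma> n \<le> \<sigma> (Suc n)" for n
    proof -
      have "0 \<le> a n / A" using a0[of n] Apos by simp
      then show ?thesis using sdiff[of n] by linarith
    qed
    have sinc: "incseq \<sigma>" using smono by (simp add: incseq_Suc_iff)
    have s1: "\<sigma> n \<le> 1" for n
    proof -
      have "(\<Sum>m<n. a m) \<le> A" unfolding A_def by (rule sum_le_suminf[OF sa]) (auto simp: a0)
      then show ?thesis using Apos by (simp add: \<sigma>_def)
    qed
    have sge: "0 \<le> \<sigma> n" for n 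
    proof -
      have "\<sigma> 0 \<le> \<sigma> n" using sinc by (simp add: incseq_def)
      then show ?thesis using s0 by simp
    qed
    have slim: "\<sigma> \<longlonglongrightarrow> 1"
    proof -
      have "(\<lambda>n. (\<Sum>m<n. a m) / A) \<longlonglongrightarrow> A / A"
        by (intro tendsto_divide summable_LIMSEQ[OF sa, folded A_def] tendsto_const) (use Apos in simp)
      then show ?thesis using Apos by (simp add: \<sigma>_def[abs_def])
    qed
    have aeq: "a n = 0" if "\<sigma> (Suc n) \<le> \<sigma> n" for n
      using sdiff[of n] that smono[of n] Apos a0[of n] by (simp add: field_simps)
    have zeq: "z (Suc n) = z n" if "\<sigma> (Suc n) \<le> \<sigma> n" for n
      using lpc_dist[OF step[of n]] aeq[OF that] by simp
    obtain \<gamma> :: "nat \<Rightarrow> real \<Rightarrow> pt" where \<gamma>: "\<And>n. (a n)-lipschitz_on {0..1} (\<gamma> n) \<and> \<gamma> n 0 = z n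
        \<and> \<gamma> n 1 = z (Suc n) \<and> \<gamma> n ` {0..1} \<subseteq> K"
    proof -
      have "\<forall>n. \<exists>g::real\<Rightarrow>pt. (a n)-lipschitz_on {0..1} g \<and> g 0 = z n \<and> g 1 = z (Suc n) \<and> g ` {0..1} \<subseteq> K"
        using step unfolding lpc_def by blast
      then have "\<exists>\<gamma>::nat\<Rightarrow>real\<Rightarrow>pt. \<forall>n. (a n)-lipschitz_on {0..1} (\<gamma> n) \<and> \<gamma> n 0 = z n \<and> \<gamma> n 1 = z (Suc n) \<and> \<gamma> n ` {0..1} \<subseteq> K"
        by (rule choice)
      then show ?thesis using that by blast
    qed
    define M where "M n t = \<gamma> n ((t - \<sigma> n) / (\<sigma> (Suc n) - \<sigma> n))" for n t
    define G where "G = rec_nat (\<lambda>t. z 0) (\<lambda>n Gn t. if t \<le> \<sigma> n then Gn t else if t \<le> \<sigma> (Suc n) then M n t else z (Suc n))"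
    have G0: "G 0 = (\<lambda>t. z 0)" by (simp add: G_def)
    have GS: "G (Suc n) t = (if t \<le> \<sigma> n then G n t else if t \<le> \<sigma> (Suc n) then M n t else z (Suc n))" for n t
      by (simp add: G_def)
    have Mlo: "M n (\<sigma> n) = z n" for n using \<gamma>[of n] by (simp add: M_def)
    have Mhi: "\<sigma> n < \<sigma> (Suc n) \<Longrightarrow> M n (\<sigma> (Suc n)) = z (Suc n)" for n using \<gamma>[of n] by (simp add: M_def)
    have Mlip: "A-lipschitz_on {\<sigma> n..\<sigma> (Suc n)} (M n)" for n
    proof (cases "\<sigma> n < \<sigma> (Suc n)")
      case True
      have Mn: "M n = (\<lambda>t. \<gamma> n ((t - \<sigma> n) / (\<sigma> (Suc n) - \<sigma> n)))"
        by (rule ext) (simp only: M_def)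
      have "(a n / (\<sigma> (Suc n) - \<sigma> n))-lipschitz_on {\<sigma> n..\<sigma> (Suc n)} (M n)"
        unfolding Mn by (rule lip_reparam[OF conjunct1[OF \<gamma>[of n]] True])
      moreover have "a n / (\<sigma> (Suc n) - \<sigma> n) = A" using sdiff[of n] True Apos by (simp add: field_simps)
      ultimately show ?thesis by simp
    next
      case False
      then have e: "{\<sigma> n..\<sigma> (Suc n)} = {\<sigma> n}" using smono[of n] by auto
      show ?thesis unfolding e by (rule lipschitz_on_singleton[OF A0])
    qed
    have MK: "M n t \<in> K" if "\<sigma> n \<le> t" "t \<le> \<sigma> (Suc n)" for n t
    proof (cases "\<sigma> n < \<sigma> (Suc n)")
      case True
      then have "(t - \<sigma> n) / (\<sigma> (Suc n) - \<sigma> n) \<in> {0..1}" using that by (auto simp: field_simps)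
      then have "\<gamma> n ((t - \<sigma> n) / (\<sigma> (Suc n) - \<sigma> n)) \<in> K" using \<gamma>[of n] by blast
      then show ?thesis by (simp only: M_def)
    next
      case False
      then have "t = \<sigma> n" using that by simp
      then have "M n t = \<gamma> n 0" by (simp add: M_def)
      moreover have "\<gamma> n 0 \<in> K" using \<gamma>[of n] by (meson atLeastAtMost_iff image_subset_iff zero_le_one order_refl)
      ultimately show ?thesis by simp
    qed
    have P: "A-lipschitz_on {0..1} (G n) \<and> (\<forall>t\<in>{0..1}. G n t \<in> K) \<and> (\<forall>t. \<sigma> n \<le> t \<longrightarrow> G n t = z n)" for n
    proof (induction n)
      case 0
      then show ?case using G0 A0 z0K s0 by (auto intro: lipschitz_on_le[OF lipschitz_on_constant])
    next
      case (Suc n)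
      have IH1: "A-lipschitz_on {0..1} (G n)" and IH2: "\<forall>t\<in>{0..1}. G n t \<in> K"
        and IH3: "\<forall>t. \<sigma> n \<le> t \<longrightarrow> G n t = z n" using Suc by auto
      have L1: "A-lipschitz_on {0..\<sigma> n} (G n)"
        by (rule lipschitz_on_subset[OF IH1]) (use s1 in auto)
      have L12: "A-lipschitz_on {0..\<sigma> (Suc n)} (\<lambda>t. if t \<le> \<sigma> n then G n t else M n t)"
        by (rule lipschitz_on_concat[OF L1 Mlip]) (use IH3 Mlo in auto)
      have L3: "A-lipschitz_on {\<sigma> (Suc n)..1} (\<lambda>t. z (Suc n))"
        by (rule lipschitz_on_le[OF lipschitz_on_constant A0])
      have jn: "(if \<sigma> (Suc n) \<le> \<sigma> n then G n (\<sigma> (Suc n)) else M n (\<sigma> (Suc n))) = z (Suc n)"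
      proof (cases "\<sigma> (Suc n) \<le> \<sigma> n")
        case True then show ?thesis using IH3 zeq[OF True] smono[of n] by auto
      next
        case False then show ?thesis using Mhi[of n] by simp
      qed
      have L: "A-lipschitz_on {0..1} (\<lambda>t. if t \<le> \<sigma> (Suc n) then (if t \<le> \<sigma> n then G n t else M n t) else z (Suc n))"
        by (rule lipschitz_on_concat[OF L12 L3]) (use jn in simp)
      have feq: "(\<lambda>t. if t \<le> \<sigma> (Suc n) then (if t \<le> \<sigma> n then G n t else M n t) else z (Suc n)) = G (Suc n)"
        using smono[of n] by (auto simp: GS)
      have K2: "\<forall>t\<in>{0..1}. G (Suc n) t \<in> K"
      proof
        fix t :: real assume t: "t \<in> {0..1}"
        have zK: "z (Suc n) \<in> K" using lpc_mem(2)[OF step[of n]] .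
        show "G (Suc n) t \<in> K"
        proof (cases "t \<le> \<sigma> n")
          case True then show ?thesis using IH2 t by (simp add: GS)
        next
          case False then show ?thesis using MK[of n t] zK by (simp add: GS)
        qed
      qed
      have K3: "\<forall>t. \<sigma> (Suc n) \<le> t \<longrightarrow> G (Suc n) t = z (Suc n)"
      proof (intro allI impI)
        fix t assume t: "\<sigma> (Suc n) \<le> t"
        show "G (Suc n) t = z (Suc n)"
        proof (cases "t \<le> \<sigma> n")
          case True
          then have "\<sigma> (Suc n) \<le> \<sigma> n" using t by simp
          then show ?thesis using True IH3 zeq[of n] t smono[of n] by (simp add: GS)
        next
          case False
          show ?thesis
          proof (cases "t \<le> \<sigma> (Suc n)")
            case True
            then have "t = \<sigma> (Suc n)" "\<sigma> n < \<sigma> (Suc n)" using t False by auto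
            then show ?thesis using Mhi[of n] False by (simp add: GS)
          qed (use False in \<open>simp add: GS\<close>)
        qed
      qed
      have "A-lipschitz_on {0..1} (G (Suc n))" using L unfolding feq .
      then show ?case using K2 K3 by blast
    qed
    have agree: "G m t = G n t" if "n \<le> m" "t \<le> \<sigma> n" for m n t
      using that(1)
    proof (induction m rule: dec_induct)
      case (step m)
      have "\<sigma> n \<le> \<sigma> m" using sinc step.hyps(1) by (simp add: incseq_def)
      then show ?case using step.IH that(2) by (simp add: GS)
    qed simp
    have conv: "\<exists>l. (\<lambda>n. G n t) \<longlonglongrightarrow> l" if t: "t \<in> {0..1}" for t
    proof (cases "t < 1")
      case True
      have "eventually (\<lambda>n. t < \<sigma> n) sequentially" by (rule order_tendstoD(1)[OF slim True])
      then obtain n0 where n0: "t < \<sigma> n0" by (auto simp: eventually_sequentially)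
      have "eventually (\<lambda>m. G m t = G n0 t) sequentially"
        unfolding eventually_sequentially using agree n0 by (intro exI[of _ n0]) auto
      then show ?thesis by (blast intro: tendsto_eventually)
    next
      case False
      then have "t = 1" using t by simp
      then have "(\<lambda>n. G n t) = z" using P s1 by (auto simp: fun_eq_iff)
      then show ?thesis using lim by (intro exI[of _ w]) simp
    qed
    define H where "H t = lim (\<lambda>n. G n t)" for t
    have HG: "(\<lambda>n. G n t) \<longlonglongrightarrow> H t" if "t \<in> {0..1}" for t
      using conv[OF that] unfolding H_def convergent_def[symmetric] by (simp add: convergent_LIMSEQ_iff)
    have H1: "H 1 = w"
    proof -
      have "(\<lambda>n. G n 1) = z" using P s1 by (auto simp: fun_eq_iff)
      then have "z \<longlonglongrightarrow> H 1" using HG[of 1] by simp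
      then show ?thesis by (rule LIMSEQ_unique[OF _ lim])
    qed
    have H0: "H 0 = z 0"
    proof -
      have "(\<lambda>n. G n 0) = (\<lambda>n. z 0)" using agree[of 0 _ 0] sge G0 by (auto simp: fun_eq_iff)
      then have "(\<lambda>n. z 0) \<longlonglongrightarrow> H 0" using HG[of 0] by simp
      then show ?thesis by (rule LIMSEQ_unique[OF _ tendsto_const])
    qed
    have HL: "A-lipschitz_on {0..1} H"
    proof (rule lipschitz_onI)
      fix s t :: real assume st: "s \<in> {0..1}" "t \<in> {0..1}"
      have "(\<lambda>n. dist (G n s) (G n t)) \<longlonglongrightarrow> dist (H s) (H t)"
        by (intro tendsto_dist HG st)
      moreover have "\<forall>n. dist (G n s) (G n t) \<le> A * dist s t"
        using P st lipschitz_onD by blast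
      ultimately show "dist (H s) (H t) \<le> A * dist s t" by (intro LIMSEQ_le_const2) auto
    qed (rule A0)
    have HK: "H ` {0..1} \<subseteq> K"
    proof (rule image_subsetI)
      fix t :: real assume t: "t \<in> {0..1}"
      show "H t \<in> K" by (rule closed_sequentially[OF K _ HG[OF t]]) (use P t in blast)
    qed
    show ?thesis unfolding lpc_def A_def[symmetric] using HL H0 H1 HK by blast
  qed
qed




lemma fat_not_seg:
  fixes x0 y0 w h :: real and S :: "pt set"
  assumes w: "w > 0" and h: "h > 0" and sub: "{x0..x0+w} \<times> {y0..y0+h} \<subseteq> S"
    and S: "is_segment S \<or> (\<exists>p. S = {p}) \<or> S = {}"
  shows False
proof -
  have P0: "(x0, y0) \<in> S" and P1: "(x0 + w, y0) \<in> S" and P2: "(x0, y0 + h) \<in> S"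
    using sub w h by auto
  consider "is_segment S" | "\<exists>p. S = {p}" | "S = {}" using S by blast
  then show False
  proof cases
    case 1
    then obtain a b where "S = closed_segment a b" unfolding is_segment_def by blast
    then have "collinear S" by simp
    then have "collinear {(x0, y0), (x0 + w, y0), (x0, y0 + h)}"
      by (rule collinear_subset) (use P0 P1 P2 in auto)
    then obtain u :: pt where u: "\<forall>x\<in>{(x0, y0), (x0 + w, y0), (x0, y0 + h)}. \<forall>y\<in>{(x0, y0), (x0 + w, y0), (x0, y0 + h)}. \<exists>c. x - y = c *\<^sub>R u"
      unfolding collinear_def by blast
    obtain c1 where c1: "(x0 + w, y0) - (x0, y0) = c1 *\<^sub>R u" using u by blast
    obtain c2 where c2: "(x0, y0 + h) - (x0, y0) = c2 *\<^sub>R u" using u by blast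
    have e1: "w = c1 * fst u" "0 = c1 * snd u" using c1 by (auto simp: prod_eq_iff)
    have e2: "0 = c2 * fst u" "h = c2 * snd u" using c2 by (auto simp: prod_eq_iff)
    have "c1 \<noteq> 0" using e1 w by auto
    then have "snd u = 0" using e1 by simp
    then show False using e2 h by simp
  next
    case 2
    then obtain p where "S = {p}" by blast
    then show False using P0 P1 w by auto
  next
    case 3 then show False using P0 by simp
  qed
qed

locale usc =
  fixes k N :: nat and c :: "nat \<Rightarrow> pt" and K :: "pt set"
  assumes U: "USC k N c K"
begin

abbreviation "\<Psi> \<equiv> usc_map k c"
abbreviation "SS \<equiv> (\<Union>i<N. usc_map k c i ` unit_square)"

lemma UU: "k \<ge> 3 \<and> 4 * (k - 1) \<le> N \<and> N \<le> k^2 - 1 \<and>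
     (\<forall>i<N. \<forall>j<N. i \<noteq> j \<longrightarrow>
        (let S = usc_map k c i ` unit_square \<inter> usc_map k c j ` unit_square
         in is_segment S \<or> (\<exists>p. S = {p}) \<or> S = {})) \<and>
     connected SS \<and>
     (\<forall>g\<in>square_isometries. g ` SS = SS) \<and>
     {0..1} \<times> {0} \<subseteq> SS \<and>
     SS \<subseteq> unit_square \<and>
     compact K \<and> K \<noteq> {} \<and> K = (\<Union>i<N. usc_map k c i ` K)"
  using U unfolding USC_def by assumption

lemma k3: "3 \<le> k" using UU by (elim conjE)
lemma kpos: "0 < real k" using k3 by simp
lemma inter:
  assumes a: "i < N" "j < N" "i \<noteq> j"
  shows "is_segment (\<Psi> i ` unit_square \<inter> \<Psi> j ` unit_square) \<or> (\<exists>p. \<Psi> i ` unit_square \<inter> \<Psi> j ` unit_square = {p})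
   \<or> \<Psi> i ` unit_square \<inter> \<Psi> j ` unit_square = {}"
proof -
  have "\<forall>i<N. \<forall>j<N. i \<noteq> j \<longrightarrow>
        (let S = usc_map k c i ` unit_square \<inter> usc_map k c j ` unit_square
         in is_segment S \<or> (\<exists>p. S = {p}) \<or> S = {})" using UU by (elim conjE)
  note all = this
  have "let S = usc_map k c i ` unit_square \<inter> usc_map k c j ` unit_square
         in is_segment S \<or> (\<exists>p. S = {p}) \<or> S = {}" by (rule all[rule_format, OF a])
  then show ?thesis by (simp only: Let_def)
qed
lemma conn: "connected SS" by (rule UU[THEN conjunct2, THEN conjunct2, THEN conjunct2, THEN conjunct2, THEN conjunct1])
lemma symm_all: "\<forall>g\<in>square_isometries. g ` SS = SS" by (rule UU[THEN conjunct2, THEN conjunct2, THEN conjunct2, THEN conjunct2, THEN conjunct2, THEN conjunct1])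
lemma symm: "g \<in> square_isometries \<Longrightarrow> g ` SS = SS" by (rule bspec[OF symm_all])
lemma bot: "{0..1} \<times> {0} \<subseteq> SS" by (rule UU[THEN conjunct2, THEN conjunct2, THEN conjunct2, THEN conjunct2, THEN conjunct2, THEN conjunct2, THEN conjunct1])
lemma SSsub: "SS \<subseteq> unit_square" by (rule UU[THEN conjunct2, THEN conjunct2, THEN conjunct2, THEN conjunct2, THEN conjunct2, THEN conjunct2, THEN conjunct2, THEN conjunct1])
lemma Kcomp: "compact K" by (rule UU[THEN conjunct2, THEN conjunct2, THEN conjunct2, THEN conjunct2, THEN conjunct2, THEN conjunct2, THEN conjunct2, THEN conjunct2, THEN conjunct1])
lemma Kclosed: "closed K" using Kcomp by (rule compact_imp_closed)
lemma Kne: "K \<noteq> {}" by (rule UU[THEN conjunct2, THEN conjunct2, THEN conjunct2, THEN conjunct2, THEN conjunct2, THEN conjunct2, THEN conjunct2, THEN conjunct2, THEN conjunct2, THEN conjunct1])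
lemma Kfix: "K = (\<Union>i<N. \<Psi> i ` K)" by (rule UU[THEN conjunct2, THEN conjunct2, THEN conjunct2, THEN conjunct2, THEN conjunct2, THEN conjunct2, THEN conjunct2, THEN conjunct2, THEN conjunct2, THEN conjunct2])

lemma Psi_eq: "\<Psi> i x = (fst x / k + fst (c i), snd x / k + snd (c i))"
  by (simp add: usc_map_def prod_eq_iff divide_inverse mult.commute)

lemma Psi_dist: "dist (\<Psi> i u) (\<Psi> i v) = (1 / real k) * dist u v"
proof -
  have "\<Psi> i u - \<Psi> i v = (1 / real k) *\<^sub>R (u - v)" by (simp add: usc_map_def algebra_simps)
  then show ?thesis using kpos by (simp add: dist_norm)
qed

lemma Psi_K: "\<Psi> i ` K \<subseteq> K" if "i < N"
proof -
  have "\<Psi> i ` K \<subseteq> (\<Union>i<N. \<Psi> i ` K)" using that by blast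
  also have "\<dots> = K" by (rule Kfix[symmetric])
  finally show ?thesis .
qed

lemma cell_mem: "z \<in> \<Psi> i ` unit_square \<longleftrightarrow>
   fst (c i) \<le> fst z \<and> fst z \<le> fst (c i) + 1 / k \<and> snd (c i) \<le> snd z \<and> snd z \<le> snd (c i) + 1 / k"
proof
  assume "z \<in> \<Psi> i ` unit_square"
  then obtain x where x: "x \<in> unit_square" "z = \<Psi> i x" by blast
  then have "0 \<le> fst x" "fst x \<le> 1" "0 \<le> snd x" "snd x \<le> 1" by (auto simp: unit_square_def)
  then show "fst (c i) \<le> fst z \<and> fst z \<le> fst (c i) + 1 / k \<and> snd (c i) \<le> snd z \<and> snd z \<le> snd (c i) + 1 / k"
    using x(2) kpos by (simp add: Psi_eq divide_right_mono)
next
  assume a: "fst (c i) \<le> fst z \<and> fst z \<le> fst (c i) + 1 / k \<and> snd (c i) \<le> snd z \<and> snd z \<le> snd (c i) + 1 / k"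
  define x where "x = (k * (fst z - fst (c i)), k * (snd z - snd (c i)))"
  have "x \<in> unit_square" using a kpos by (auto simp: x_def unit_square_def field_simps)
  moreover have "z = \<Psi> i x" using kpos by (simp add: x_def Psi_eq prod_eq_iff)
  ultimately show "z \<in> \<Psi> i ` unit_square" by blast
qed

lemma cell_in_square: assumes "i < N"
  shows "0 \<le> fst (c i)" "fst (c i) + 1 / k \<le> 1" "0 \<le> snd (c i)" "snd (c i) + 1 / k \<le> 1"
proof -
  have "c i \<in> \<Psi> i ` unit_square" "c i + (1/k, 1/k) \<in> \<Psi> i ` unit_square"
    unfolding cell_mem by auto
  then have "c i \<in> unit_square" "c i + (1/k, 1/k) \<in> unit_square" using SSsub assms by blast+
  then show "0 \<le> fst (c i)" "fst (c i) + 1 / k \<le> 1" "0 \<le> snd (c i)" "snd (c i) + 1 / k \<le> 1"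
    by (auto simp: unit_square_def)
qed

lemma not_fat:
  assumes ij: "i < N" "j < N" "i \<noteq> j"
    and d1: "\<bar>fst (c i) - fst (c j)\<bar> < 1 / k" and d2: "\<bar>snd (c i) - snd (c j)\<bar> < 1 / k"
  shows False
proof -
  define x0 where "x0 = max (fst (c i)) (fst (c j))"
  define y0 where "y0 = max (snd (c i)) (snd (c j))"
  define w where "w = 1 / k - \<bar>fst (c i) - fst (c j)\<bar>"
  define h where "h = 1 / k - \<bar>snd (c i) - snd (c j)\<bar>"
  have "{x0..x0+w} \<times> {y0..y0+h} \<subseteq> \<Psi> i ` unit_square \<inter> \<Psi> j ` unit_square"
  proof (rule subsetI)
    fix z :: pt assume "z \<in> {x0..x0+w} \<times> {y0..y0+h}"
    then have "x0 \<le> fst z" "fst z \<le> x0 + w" "y0 \<le> snd z" "snd z \<le> y0 + h" by auto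
    then show "z \<in> \<Psi> i ` unit_square \<inter> \<Psi> j ` unit_square"
      unfolding Int_iff cell_mem x0_def y0_def w_def h_def by (simp add: abs_if max_def split: if_splits)
  qed
  moreover have "w > 0" "h > 0" using d1 d2 by (auto simp: w_def h_def)
  ultimately show False using fat_not_seg inter[OF ij] by blast
qed

end



definition bd :: "pt set" where
  "bd = {z \<in> unit_square. fst z = 0 \<or> fst z = 1 \<or> snd z = 0 \<or> snd z = 1}"

lemma geom_small:
  fixes x B r :: real
  assumes r: "1 < r" and le: "\<And>n. x \<le> B * (1 / r) ^ n"
  shows "x \<le> 0"
proof -
  have "(\<lambda>n. B * (1 / r) ^ n) \<longlonglongrightarrow> B * 0"
    by (intro tendsto_mult tendsto_const LIMSEQ_power_zero) (use r in simp)
  then have "x \<le> B * 0" by (rule LIMSEQ_le_const) (use le in auto)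
  then show ?thesis by simp
qed

context usc begin

lemma edges_SS:
  assumes t: "0 \<le> t" "t \<le> 1"
  shows "(t, 0) \<in> SS" "(t, 1) \<in> SS" "(0, t) \<in> SS" "(1, t) \<in> SS"
proof -
  have "(t, 0) \<in> {0..1} \<times> {0}" using t by simp
  then show b: "(t, 0) \<in> SS" using bot by (rule subsetD[rotated])
  have g1: "(\<lambda>(x,y). (x, 1 - y)) \<in> square_isometries" by (simp add: square_isometries_def)
  have g2: "(\<lambda>(x,y). (y, x)) \<in> square_isometries" by (simp add: square_isometries_def)
  have g3: "(\<lambda>(x,y). (1 - y, x)) \<in> square_isometries" by (simp add: square_isometries_def)
  have "(\<lambda>(x,y). (x, 1 - y)) (t, 0) \<in> (\<lambda>(x,y). (x, 1 - y)) ` SS" using b by (rule imageI)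
  then show "(t, 1) \<in> SS" using symm[OF g1] by simp
  have "(\<lambda>(x,y). (y, x)) (t, 0) \<in> (\<lambda>(x,y). (y, x)) ` SS" using b by (rule imageI)
  then show "(0, t) \<in> SS" using symm[OF g2] by simp
  have "(\<lambda>(x,y). (1 - y, x)) (t, 0) \<in> (\<lambda>(x,y). (1 - y, x)) ` SS" using b by (rule imageI)
  then show "(1, t) \<in> SS" using symm[OF g3] by simp
qed

lemma bd_SS: "z \<in> bd \<Longrightarrow> z \<in> SS"
  using edges_SS[of "fst z"] edges_SS[of "snd z"]
  by (cases z) (auto simp: bd_def unit_square_def)

lemma bd_decomp:
  assumes z: "z \<in> bd"
  shows "\<exists>i<N. \<exists>w\<in>bd. z = \<Psi> i w"
proof -
  obtain i where i: "i < N" "z \<in> \<Psi> i ` unit_square" using bd_SS[OF z] by blast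
  then obtain w where w: "w \<in> unit_square" "z = \<Psi> i w" by blast
  have ci: "0 \<le> fst (c i)" "fst (c i) + 1 / k \<le> 1" "0 \<le> snd (c i)" "snd (c i) + 1 / k \<le> 1"
    using cell_in_square[OF i(1)] by auto
  have wc: "0 \<le> fst w" "fst w \<le> 1" "0 \<le> snd w" "snd w \<le> 1" using w(1) by (auto simp: unit_square_def)
  have zc: "fst z = fst w / k + fst (c i)" "snd z = snd w / k + snd (c i)" using w(2) by (auto simp: Psi_eq)
  have kk: "0 < real k" by (rule kpos)
  have "fst w = 0 \<or> fst w = 1 \<or> snd w = 0 \<or> snd w = 1"
  proof -
    consider "fst z = 0" | "fst z = 1" | "snd z = 0" | "snd z = 1" using z by (auto simp: bd_def)
    then show ?thesis
    proof cases
      case 1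
      then have "fst w / k = 0" using zc ci wc kk by (smt (verit) divide_nonneg_pos)
      then show ?thesis using kk by simp
    next
      case 2
      then have "fst w / k = 1 / k" using zc ci wc kk
        by (smt (verit, best) divide_right_mono of_nat_0_le_iff)
      then show ?thesis using kk by (simp add: divide_cancel_right)
    next
      case 3
      then have "snd w / k = 0" using zc ci wc kk by (smt (verit) divide_nonneg_pos)
      then show ?thesis using kk by simp
    next
      case 4
      then have "snd w / k = 1 / k" using zc ci wc kk
        by (smt (verit, best) divide_right_mono of_nat_0_le_iff)
      then show ?thesis using kk by (simp add: divide_cancel_right)
    qed
  qed
  then have "w \<in> bd" using w(1) by (auto simp: bd_def)
  then show ?thesis using i w by blast
qed

lemma K_sub: "K \<subseteq> unit_square"
proof
  fix y assume yK: "y \<in> K"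
  have cl: "closed unit_square" unfolding unit_square_def by (intro closed_Times closed_atLeastAtMost)
  have ne: "unit_square \<noteq> {}" unfolding unit_square_def by auto
  obtain B where B: "\<forall>x\<in>K. norm x \<le> B" using compact_imp_bounded[OF Kcomp] bounded_iff by blast
  have z0: "(0::pt) \<in> unit_square" by (simp add: unit_square_def zero_prod_def)
  have main: "\<forall>x\<in>K. infdist x unit_square \<le> B * (1 / k) ^ n" for n
  proof (induction n)
    case 0
    show ?case
    proof
      fix x assume "x \<in> K"
      have "infdist x unit_square \<le> dist x 0" by (rule infdist_le[OF z0])
      also have "\<dots> \<le> B" using B \<open>x \<in> K\<close> by simp
      finally show "infdist x unit_square \<le> B * (1 / real k) ^ 0" by simp
    qed
  next
    case (Suc n)
    show ?case
    proof
      fix x assume xK: "x \<in> K"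
      then obtain i x' where i: "i < N" "x' \<in> K" "x = \<Psi> i x'" using Kfix by blast
      obtain q where q: "q \<in> unit_square" "infdist x' unit_square = dist x' q"
        using infdist_attains_inf[OF cl ne] by blast
      have "\<Psi> i q \<in> SS" using q(1) i(1) by blast
      then have Pq: "\<Psi> i q \<in> unit_square" using SSsub by blast
      have "infdist x unit_square \<le> dist x (\<Psi> i q)" by (rule infdist_le[OF Pq])
      also have "\<dots> = (1 / k) * dist x' q" using i(3) Psi_dist by simp
      also have "\<dots> \<le> (1 / k) * (B * (1 / k) ^ n)"
        using Suc.IH i(2) q(2) kpos by (intro mult_left_mono) auto
      finally show "infdist x unit_square \<le> B * (1 / real k) ^ Suc n" by (simp add: algebra_simps)
    qed
  qed
  have "infdist y unit_square \<le> 0"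
    by (rule geom_small[of k]) (use k3 main yK in auto)
  then have "infdist y unit_square = 0" using infdist_nonneg[of y unit_square] by linarith
  then have "y \<in> closure unit_square" using in_closure_iff_infdist_zero[OF ne] by blast
  then show "y \<in> unit_square" using cl by simp
qed

lemma bd_K: "bd \<subseteq> K"
proof
  fix y assume yb: "y \<in> bd"
  have main: "\<forall>x\<in>bd. infdist x K \<le> 2 * (1 / k) ^ n" for n
  proof (induction n)
    case 0
    show ?case
    proof
      fix x assume "x \<in> bd"
      obtain p where p: "p \<in> K" using Kne by blast
      have "infdist x K \<le> dist x p" by (rule infdist_le[OF p])
      also have "\<dots> \<le> 2"
      proof -
        have "x \<in> unit_square" "p \<in> unit_square" using \<open>x \<in> bd\<close> p K_sub by (auto simp: bd_def)
        then have "\<bar>fst x - fst p\<bar> \<le> 1" "\<bar>snd x - snd p\<bar> \<le> 1" by (auto simp: unit_square_def)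
        then have "dist x p \<le> \<bar>fst x - fst p\<bar> + \<bar>snd x - snd p\<bar>"
          by (simp add: dist_prod_def dist_real_def sqrt_sum_squares_le_sum_abs)
        with \<open>\<bar>fst x - fst p\<bar> \<le> 1\<close> \<open>\<bar>snd x - snd p\<bar> \<le> 1\<close> show ?thesis by linarith
      qed
      finally show "infdist x K \<le> 2 * (1 / real k) ^ 0" by simp
    qed
  next
    case (Suc n)
    show ?case
    proof
      fix x assume xb: "x \<in> bd"
      obtain i w where i: "i < N" "w \<in> bd" "x = \<Psi> i w" using bd_decomp[OF xb] by blast
      obtain q where q: "q \<in> K" "infdist w K = dist w q"
        using infdist_attains_inf[OF Kclosed Kne] by blast
      have Pq: "\<Psi> i q \<in> K" using Psi_K[OF i(1)] q(1) by blast
      have "infdist x K \<le> dist x (\<Psi> i q)" by (rule infdist_le[OF Pq])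
      also have "\<dots> = (1 / k) * dist w q" using i(3) Psi_dist by simp
      also have "\<dots> \<le> (1 / k) * (2 * (1 / k) ^ n)"
        using Suc.IH i(2) q(2) kpos by (intro mult_left_mono) auto
      finally show "infdist x K \<le> 2 * (1 / real k) ^ Suc n" by (simp add: algebra_simps)
    qed
  qed
  have "infdist y K \<le> 0"
    by (rule geom_small[of k]) (use k3 main yb in auto)
  then have "infdist y K = 0" using infdist_nonneg[of y K] by linarith
  then have "y \<in> closure K" using in_closure_iff_infdist_zero[OF Kne] by blast
  then show "y \<in> K" using Kclosed by simp
qed

end



lemma conv01:
  fixes u a b :: real
  assumes "0 \<le> u" "u \<le> 1" "0 \<le> a" "a \<le> 1" "0 \<le> b" "b \<le> 1"
  shows "0 \<le> (1 - u) * a + u * b" "(1 - u) * a + u * b \<le> 1"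
proof -
  have f1: "(1 - u) * a \<le> (1 - u) * 1" using assms by (intro mult_left_mono) auto
  have f2: "u * b \<le> u * 1" using assms by (intro mult_left_mono) auto
  have f3: "0 \<le> (1 - u) * a" "0 \<le> u * b" using assms by auto
  show "0 \<le> (1 - u) * a + u * b" using f3 by linarith
  have "(1 - u) * a + u * b \<le> (1 - u) * 1 + u * 1" by (rule add_mono[OF f1 f2])
  then show "(1 - u) * a + u * b \<le> 1" by simp
qed

lemma seg_bd:
  fixes a b :: real
  assumes "0 \<le> a" "a \<le> 1" "0 \<le> b" "b \<le> 1"
  shows "closed_segment (a, 0) (b, 0) \<subseteq> bd" "closed_segment (a, 1) (b, 1) \<subseteq> bd"
    "closed_segment (0, a) (0, b) \<subseteq> bd" "closed_segment (1, a) (1, b) \<subseteq> bd"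
proof -
  have key: "\<And>u. 0 \<le> u \<Longrightarrow> u \<le> 1 \<Longrightarrow> 0 \<le> (1 - u) * a + u * b \<and> (1 - u) * a + u * b \<le> 1"
    using conv01 assms by blast
  show "closed_segment (a, 0) (b, 0) \<subseteq> bd" "closed_segment (a, 1) (b, 1) \<subseteq> bd"
    "closed_segment (0, a) (0, b) \<subseteq> bd" "closed_segment (1, a) (1, b) \<subseteq> bd"
    unfolding closed_segment_def bd_def unit_square_def
    using key by (auto simp: algebra_simps)
qed

context usc begin

abbreviation "o0 \<equiv> ((0::real), (0::real))"

lemma o0_bd: "o0 \<in> bd" by (simp add: bd_def unit_square_def)

lemma seg_lpc:
  assumes "closed_segment p q \<subseteq> bd"
  shows "lpc K (dist p q) p q"
  using assms bd_K by (intro lpc_seg) blast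

lemma bd_path: assumes p: "p \<in> bd" shows "lpc K 2 p o0"
proof -
  obtain a b where ab: "p = (a, b)" by (cases p)
  have r: "0 \<le> a" "a \<le> 1" "0 \<le> b" "b \<le> 1" using p ab by (auto simp: bd_def unit_square_def)
  have z: "(0::real) \<le> 0" "(0::real) \<le> 1" "(1::real) \<le> 1" "(0::real) \<le> 1" by auto
  consider "a = 0" | "a = 1" | "b = 0" | "b = 1" using p ab by (auto simp: bd_def)
  then show ?thesis
  proof cases
    case 1
    have "lpc K (dist p o0) p o0" using seg_lpc seg_bd(3)[OF r(3,4) z(1,2)] ab 1 by simp
    moreover have "dist p o0 \<le> 2" using ab 1 r by (simp add: dist_prod_def)
    ultimately show ?thesis by (rule lpc_mono)
  next
    case 3
    have "lpc K (dist p o0) p o0" using seg_lpc seg_bd(1)[OF r(1,2) z(1,2)] ab 3 by simp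
    moreover have "dist p o0 \<le> 2" using ab 3 r by (simp add: dist_prod_def)
    ultimately show ?thesis by (rule lpc_mono)
  next
    case 2
    have l1: "lpc K (dist p (1, 0)) p (1, 0)" using seg_lpc seg_bd(4)[OF r(3,4) z(1,2)] ab 2 by simp
    have l2: "lpc K (dist (1::real, 0::real) o0) (1, 0) o0" using seg_lpc seg_bd(1)[OF z(4,3) z(1,2)] by simp
    have "lpc K (dist p (1, 0) + dist (1::real, 0::real) o0) p o0" by (rule lpc_trans[OF l1 l2])
    moreover have "dist p (1, 0) + dist (1::real, 0::real) o0 \<le> 2" using ab 2 r by (simp add: dist_prod_def)
    ultimately show ?thesis by (rule lpc_mono)
  next
    case 4
    have l1: "lpc K (dist p (0, 1)) p (0, 1)" using seg_lpc seg_bd(2)[OF r(1,2) z(1,2)] ab 4 by simp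
    have l2: "lpc K (dist (0::real, 1::real) o0) (0, 1) o0" using seg_lpc seg_bd(3)[OF z(4,3) z(1,2)] by simp
    have "lpc K (dist p (0, 1) + dist (0::real, 1::real) o0) p o0" by (rule lpc_trans[OF l1 l2])
    moreover have "dist p (0, 1) + dist (0::real, 1::real) o0 \<le> 2" using ab 4 r by (simp add: dist_prod_def)
    ultimately show ?thesis by (rule lpc_mono)
  qed
qed

lemma lpc_Psi: assumes "i < N" "lpc K L x y" shows "lpc K ((1 / k) * L) (\<Psi> i x) (\<Psi> i y)"
  by (rule lpc_map[OF assms(2)]) (use kpos Psi_dist Psi_K[OF assms(1)] in auto)

lemma Psi_o0: "\<Psi> i o0 = c i" by (simp add: Psi_eq)

lemma cell_path: assumes "i < N" "p \<in> bd" shows "lpc K (2 / k) (\<Psi> i p) (c i)"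
  using lpc_Psi[OF assms(1) bd_path[OF assms(2)]] Psi_o0 by simp

lemma cell_bd:
  assumes "z \<in> \<Psi> i ` unit_square"
    and "fst z = fst (c i) \<or> fst z = fst (c i) + 1 / k \<or> snd z = snd (c i) \<or> snd z = snd (c i) + 1 / k"
  shows "\<exists>w\<in>bd. z = \<Psi> i w"
proof -
  obtain w where w: "w \<in> unit_square" "z = \<Psi> i w" using assms(1) by blast
  have zc: "fst z = fst w / k + fst (c i)" "snd z = snd w / k + snd (c i)" using w(2) by (auto simp: Psi_eq)
  have "fst w = 0 \<or> fst w = 1 \<or> snd w = 0 \<or> snd w = 1"
    using assms(2) zc kpos by (auto simp: divide_cancel_right)
  then have "w \<in> bd" using w(1) by (simp add: bd_def)
  then show ?thesis using w(2) by blast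
qed

lemma touch_bd:
  assumes ij: "i < N" "j < N" "i \<noteq> j" and z: "z \<in> \<Psi> i ` unit_square" "z \<in> \<Psi> j ` unit_square"
  shows "\<exists>w\<in>bd. z = \<Psi> i w"
proof (rule cell_bd[OF z(1)])
  show "fst z = fst (c i) \<or> fst z = fst (c i) + 1 / k \<or> snd z = snd (c i) \<or> snd z = snd (c i) + 1 / k"
  proof (rule ccontr)
    assume "\<not> ?thesis"
    moreover have "fst (c i) \<le> fst z \<and> fst z \<le> fst (c i) + 1 / k \<and> snd (c i) \<le> snd z \<and> snd z \<le> snd (c i) + 1 / k"
      using z(1) cell_mem by blast
    moreover have "fst (c j) \<le> fst z \<and> fst z \<le> fst (c j) + 1 / k \<and> snd (c j) \<le> snd z \<and> snd z \<le> snd (c j) + 1 / k"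
      using z(2) cell_mem by blast
    ultimately have "\<bar>fst (c i) - fst (c j)\<bar> < 1 / k" "\<bar>snd (c i) - snd (c j)\<bar> < 1 / k" by auto
    then show False using not_fat[OF ij] by blast
  qed
qed

lemma cell_closed: "closed (\<Psi> i ` unit_square)"
proof -
  have "\<Psi> i ` unit_square = {fst (c i)..fst (c i) + 1 / k} \<times> {snd (c i)..snd (c i) + 1 / k}"
    by (rule set_eqI) (simp add: cell_mem mem_Times_iff)
  then show ?thesis by (simp add: closed_Times)
qed

lemma connect_cells: "\<forall>i<N. \<exists>L. lpc K L (c i) o0"
proof (rule ccontr)
  assume nall: "\<not> (\<forall>i<N. \<exists>L. lpc K L (c i) o0)"
  define R where "R = {i. i < N \<and> (\<exists>L. lpc K L (c i) o0)}"
  define R' where "R' = {i. i < N \<and> \<not> (\<exists>L. lpc K L (c i) o0)}"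
  define U where "U = (\<Union>i\<in>R. \<Psi> i ` unit_square)"
  define V where "V = (\<Union>i\<in>R'. \<Psi> i ` unit_square)"
  have fR: "finite R" "finite R'" unfolding R_def R'_def by auto
  have cU: "closed U" unfolding U_def using fR cell_closed by (intro closed_UN) auto
  have cV: "closed V" unfolding V_def using fR cell_closed by (intro closed_UN) auto
  have cov: "SS \<subseteq> U \<union> V" unfolding U_def V_def R_def R'_def by blast
  have disj: "U \<inter> V \<inter> SS = {}"
  proof (rule ccontr)
    assume "U \<inter> V \<inter> SS \<noteq> {}"
    then obtain z i j where z: "i \<in> R" "j \<in> R'" "z \<in> \<Psi> i ` unit_square" "z \<in> \<Psi> j ` unit_square"
      unfolding U_def V_def by blast
    have ij: "i < N" "j < N" "i \<noteq> j" using z(1,2) unfolding R_def R'_def by auto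
    obtain L where L: "lpc K L (c i) o0" using z(1) unfolding R_def by blast
    obtain w where w: "w \<in> bd" "z = \<Psi> i w" using touch_bd[OF ij z(3,4)] by blast
    obtain w' where w': "w' \<in> bd" "z = \<Psi> j w'" using touch_bd[OF ij(2,1) ij(3)[symmetric] z(4,3)] by blast
    have p1: "lpc K (2 / k) z (c i)" using cell_path[OF ij(1) w(1)] w(2) by simp
    have p2: "lpc K (2 / k) z (c j)" using cell_path[OF ij(2) w'(1)] w'(2) by simp
    have "lpc K (2 / k + 2 / k + L) (c j) o0"
      by (rule lpc_trans[OF lpc_trans[OF lpc_sym[OF p2] p1] L])
    then show False using z(2) unfolding R'_def by blast
  qed
  have "o0 \<in> SS" using bd_SS o0_bd by blast
  then obtain i where i: "i < N" "o0 \<in> \<Psi> i ` unit_square" by blast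
  have "fst (c i) \<le> 0" using i(2) unfolding cell_mem by simp
  then have "fst (c i) = 0" using cell_in_square[OF i(1)] by linarith
  then obtain w where w: "w \<in> bd" "o0 = \<Psi> i w" using cell_bd[OF i(2)] by auto
  have "lpc K (2 / k) (c i) o0" using lpc_sym[OF cell_path[OF i(1) w(1)]] w(2) by simp
  then have "i \<in> R" using i(1) unfolding R_def by blast
  then have Une: "U \<inter> SS \<noteq> {}" using i(2) \<open>o0 \<in> SS\<close> unfolding U_def by blast
  obtain j where j: "j < N" "\<not> (\<exists>L. lpc K L (c j) o0)" using nall by blast
  then have "j \<in> R'" unfolding R'_def by blast
  moreover have "c j \<in> \<Psi> j ` unit_square" unfolding cell_mem by simp
  ultimately have Vne: "V \<inter> SS \<noteq> {}" using j(1) unfolding V_def by blast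
  show False using conn cU cV cov disj Une Vne unfolding connected_closed by blast
qed

end



context usc begin

lemma K_dist_le2: assumes "x \<in> K" "y \<in> K" shows "dist x y \<le> 2"
proof -
  have "x \<in> unit_square" "y \<in> unit_square" using assms K_sub by auto
  then have "\<bar>fst x - fst y\<bar> \<le> 1" "\<bar>snd x - snd y\<bar> \<le> 1" by (auto simp: unit_square_def)
  moreover have "dist x y \<le> \<bar>fst x - fst y\<bar> + \<bar>snd x - snd y\<bar>"
    by (simp add: dist_prod_def dist_real_def sqrt_sum_squares_le_sum_abs)
  ultimately show ?thesis by linarith
qed

lemma bounded_to_o0: "\<exists>D. \<forall>x\<in>K. lpc K D x o0"
proof -
  have "\<forall>i. \<exists>L. i < N \<longrightarrow> lpc K L (c i) o0" using connect_cells by blast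
  from choice[OF this] obtain f where f0: "\<forall>i. i < N \<longrightarrow> lpc K (f i) (c i) o0" by blast
  then have f: "\<forall>i<N. lpc K (f i) (c i) o0" by blast
  have fnn: "\<forall>i<N. 0 \<le> f i" using f lpc_nonneg by blast
  define E where "E = (\<Sum>i<N. f i)"
  have fE: "lpc K E (c i) o0" if "i < N" for i
  proof (rule lpc_mono[OF f[rule_format, OF that]])
    show "f i \<le> E" unfolding E_def
      by (rule member_le_sum) (use that fnn in auto)
  qed
  have "\<forall>x. \<exists>p. x \<in> K \<longrightarrow> fst p < N \<and> snd p \<in> K \<and> x = \<Psi> (fst p) (snd p)"
  proof
    fix x show "\<exists>p. x \<in> K \<longrightarrow> fst p < N \<and> snd p \<in> K \<and> x = \<Psi> (fst p) (snd p)"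
    proof (cases "x \<in> K")
      case False then show ?thesis by blast
    next
      case True
      then obtain i y where "i < N" "y \<in> K" "x = \<Psi> i y" using Kfix by blast
      then show ?thesis by (intro exI[of _ "(i, y)"]) auto
    qed
  qed
  from choice[OF this] obtain nx where nx0: "\<forall>x. x \<in> K \<longrightarrow> fst (nx x) < N \<and> snd (nx x) \<in> K \<and> x = \<Psi> (fst (nx x)) (snd (nx x))"
    by blast
  then have nx: "\<forall>x\<in>K. fst (nx x) < N \<and> snd (nx x) \<in> K \<and> x = \<Psi> (fst (nx x)) (snd (nx x))"
    by blast
  define a where "a n = (1 / real k) ^ n * E" for n
  have sa: "summable a" unfolding a_def using k3
    by (intro summable_mult2 summable_geometric) auto
  have "lpc K (suminf a) o0 x" if xK: "x \<in> K" for x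
  proof -
    define xs where "xs n = ((\<lambda>y. snd (nx y)) ^^ n) x" for n
    define ws where "ws n = fst (nx (xs n))" for n
    define \<Phi> where "\<Phi> = rec_nat (\<lambda>z. z) (\<lambda>n F. F \<circ> \<Psi> (ws n))"
    have \<Phi>0: "\<Phi> 0 = (\<lambda>z. z)" by (simp add: \<Phi>_def)
    have \<Phi>S: "\<Phi> (Suc n) = \<Phi> n \<circ> \<Psi> (ws n)" for n by (simp add: \<Phi>_def)
    have xsK: "xs n \<in> K" for n
      by (induction n) (use xK nx in \<open>auto simp: xs_def\<close>)
    have xsS: "xs (Suc n) = snd (nx (xs n))" for n by (simp add: xs_def)
    have wsN: "ws n < N" for n using nx xsK by (simp add: ws_def)
    have xsrec: "xs n = \<Psi> (ws n) (xs (Suc n))" for n using nx xsK[of n] by (simp add: ws_def xsS)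
    have \<Phi>K: "\<Phi> n ` K \<subseteq> K" for n
    proof (induction n)
      case 0 then show ?case by (simp add: \<Phi>0)
    next
      case (Suc n)
      have "\<Phi> (Suc n) ` K = \<Phi> n ` (\<Psi> (ws n) ` K)" by (simp add: \<Phi>S image_comp)
      also have "\<dots> \<subseteq> \<Phi> n ` K" using Psi_K[OF wsN[of n]] by (rule image_mono)
      finally show ?case using Suc by blast
    qed
    have \<Phi>d: "dist (\<Phi> n u) (\<Phi> n v) = (1 / real k) ^ n * dist u v" for n u v
    proof (induction n arbitrary: u v)
      case 0 then show ?case by (simp add: \<Phi>0)
    next
      case (Suc n)
      have "dist (\<Phi> (Suc n) u) (\<Phi> (Suc n) v) = (1 / real k) ^ n * dist (\<Psi> (ws n) u) (\<Psi> (ws n) v)"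
        by (simp add: \<Phi>S Suc)
      also have "\<dots> = (1 / real k) ^ Suc n * dist u v" by (simp add: Psi_dist)
      finally show ?case .
    qed
    have \<Phi>x: "\<Phi> n (xs n) = x" for n
    proof (induction n)
      case 0 then show ?case by (simp add: \<Phi>0 xs_def)
    next
      case (Suc n) then show ?case using xsrec[of n] by (simp add: \<Phi>S)
    qed
    define z where "z n = \<Phi> n o0" for n
    have step: "lpc K (a n) (z n) (z (Suc n))" for n
    proof -
      have "lpc K E o0 (c (ws n))" using lpc_sym[OF fE[OF wsN[of n]]] .
      then have "lpc K ((1 / real k) ^ n * E) (\<Phi> n o0) (\<Phi> n (c (ws n)))"
        by (rule lpc_map) (use \<Phi>d \<Phi>K in auto)
      moreover have "\<Phi> n (c (ws n)) = z (Suc n)" by (simp add: z_def \<Phi>S Psi_o0)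
      ultimately show ?thesis by (simp add: a_def z_def)
    qed
    have zlim: "z \<longlonglongrightarrow> x"
    proof -
      have b: "norm (dist (z n) x) \<le> 2 * (1 / real k) ^ n" for n
      proof -
        have "dist (z n) x = (1 / real k) ^ n * dist o0 (xs n)"
          using \<Phi>d[of n o0 "xs n"] \<Phi>x[of n] by (simp add: z_def)
        also have "\<dots> \<le> (1 / real k) ^ n * 2"
        proof (rule mult_left_mono)
          have "o0 \<in> K" using bd_K o0_bd by blast
          then show "dist o0 (xs n) \<le> 2" using K_dist_le2 xsK by blast
        qed simp
        finally show ?thesis by simp
      qed
      have "(\<lambda>n. 2 * (1 / real k) ^ n) \<longlonglongrightarrow> 2 * 0"
        by (intro tendsto_mult tendsto_const LIMSEQ_power_zero) (use kpos k3 in simp)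
      then have l2: "(\<lambda>n. 2 * (1 / real k) ^ n) \<longlonglongrightarrow> 0" by simp
      have ev: "eventually (\<lambda>n. norm (dist (z n) x) \<le> 2 * (1 / real k) ^ n) sequentially"
        using b by (intro always_eventually allI)
      have "(\<lambda>n. dist (z n) x) \<longlonglongrightarrow> 0" by (rule Lim_null_comparison[OF ev l2])
      then show ?thesis by (subst tendsto_dist_iff)
    qed
    have "lpc K (suminf a) (z 0) x" by (rule lpc_inf[OF Kclosed step sa zlim])
    then show ?thesis by (simp add: z_def \<Phi>0)
  qed
  then show ?thesis by (blast intro: lpc_sym)
qed

end



lemma abs_lt: fixes a b e :: real shows "a - b < e \<Longrightarrow> b - a < e \<Longrightarrow> \<bar>a - b\<bar> < e" by linarith

context usc begin

lemma row_bot: assumes i: "i < N" and lt: "snd (c i) < 1 / k" shows "snd (c i) = 0"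
proof (rule ccontr)
  assume ne: "snd (c i) \<noteq> 0"
  have ci: "0 \<le> fst (c i)" "fst (c i) + 1 / k \<le> 1" "0 \<le> snd (c i)" "snd (c i) + 1 / k \<le> 1"
    using cell_in_square[OF i] by auto
  have kk: "0 < 1 / real k" using kpos by simp
  define hh where "hh = 1 / real k / 2"
  have hh1: "0 < hh" using kk by (simp add: hh_def)
  have hh2: "hh < 1 / real k" using kpos by (simp add: hh_def field_simps)
  note hh = hh1 hh2
  define t where "t = fst (c i) + hh"
  have t2: "1 / (2 * real k) = (1 / k) / 2" by simp
  have t0: "0 \<le> t" using ci hh unfolding t_def by linarith
  have t1: "t \<le> 1" using ci hh unfolding t_def by linarith
  note t01 = t0 t1
  obtain j where j: "j < N" "(t, 0) \<in> \<Psi> j ` unit_square" using edges_SS(1)[OF t01] by blast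
  have cj: "0 \<le> fst (c j)" "fst (c j) + 1 / k \<le> 1" "0 \<le> snd (c j)" "snd (c j) + 1 / k \<le> 1"
    using cell_in_square[OF j(1)] by auto
  have m: "fst (c j) \<le> t" "t \<le> fst (c j) + 1 / k" "snd (c j) \<le> 0" using j(2) unfolding cell_mem by auto
  have "i \<noteq> j" using ne m(3) cj(3) by auto
  moreover have "\<bar>fst (c i) - fst (c j)\<bar> < 1 / k" using m hh unfolding t_def by (intro abs_lt) linarith+
  moreover have "\<bar>snd (c i) - snd (c j)\<bar> < 1 / k" using m cj ci lt kk by (intro abs_lt) linarith+
  ultimately show False using not_fat i j(1) by blast
qed

lemma row_top: assumes i: "i < N" and lt: "1 - 2 / k < snd (c i)" shows "snd (c i) = 1 - 1 / k"
proof (rule ccontr)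
  assume ne: "snd (c i) \<noteq> 1 - 1 / k"
  have ci: "0 \<le> fst (c i)" "fst (c i) + 1 / k \<le> 1" "0 \<le> snd (c i)" "snd (c i) + 1 / k \<le> 1"
    using cell_in_square[OF i] by auto
  have kk: "0 < 1 / real k" using kpos by simp
  define hh where "hh = 1 / real k / 2"
  have hh1: "0 < hh" using kk by (simp add: hh_def)
  have hh2: "hh < 1 / real k" using kpos by (simp add: hh_def field_simps)
  note hh = hh1 hh2
  define t where "t = fst (c i) + hh"
  have t2: "1 / (2 * real k) = (1 / k) / 2" by simp
  have k2: "2 / real k = 2 * (1 / k)" by simp
  have t0: "0 \<le> t" using ci hh unfolding t_def by linarith
  have t1: "t \<le> 1" using ci hh unfolding t_def by linarith
  note t01 = t0 t1
  obtain j where j: "j < N" "(t, 1) \<in> \<Psi> j ` unit_square" using edges_SS(2)[OF t01] by blast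
  have cj: "0 \<le> fst (c j)" "fst (c j) + 1 / k \<le> 1" "0 \<le> snd (c j)" "snd (c j) + 1 / k \<le> 1"
    using cell_in_square[OF j(1)] by auto
  have m: "fst (c j) \<le> t" "t \<le> fst (c j) + 1 / k" "1 \<le> snd (c j) + 1 / k" using j(2) unfolding cell_mem by auto
  have "i \<noteq> j" using ne m(3) cj(4) by auto
  moreover have "\<bar>fst (c i) - fst (c j)\<bar> < 1 / k" using m hh unfolding t_def by (intro abs_lt) linarith+
  moreover have "\<bar>snd (c i) - snd (c j)\<bar> < 1 / k" using m cj ci lt kk unfolding k2 by (intro abs_lt) linarith+
  ultimately show False using not_fat i j(1) by blast
qed

lemma row_left: assumes i: "i < N" and lt: "fst (c i) < 1 / k" shows "fst (c i) = 0"
proof (rule ccontr)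
  assume ne: "fst (c i) \<noteq> 0"
  have ci: "0 \<le> fst (c i)" "fst (c i) + 1 / k \<le> 1" "0 \<le> snd (c i)" "snd (c i) + 1 / k \<le> 1"
    using cell_in_square[OF i] by auto
  have kk: "0 < 1 / real k" using kpos by simp
  define hh where "hh = 1 / real k / 2"
  have hh1: "0 < hh" using kk by (simp add: hh_def)
  have hh2: "hh < 1 / real k" using kpos by (simp add: hh_def field_simps)
  note hh = hh1 hh2
  define t where "t = snd (c i) + hh"
  have t2: "1 / (2 * real k) = (1 / k) / 2" by simp
  have t0: "0 \<le> t" using ci hh unfolding t_def by linarith
  have t1: "t \<le> 1" using ci hh unfolding t_def by linarith
  note t01 = t0 t1
  obtain j where j: "j < N" "(0, t) \<in> \<Psi> j ` unit_square" using edges_SS(3)[OF t01] by blast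
  have cj: "0 \<le> fst (c j)" "fst (c j) + 1 / k \<le> 1" "0 \<le> snd (c j)" "snd (c j) + 1 / k \<le> 1"
    using cell_in_square[OF j(1)] by auto
  have m: "snd (c j) \<le> t" "t \<le> snd (c j) + 1 / k" "fst (c j) \<le> 0" using j(2) unfolding cell_mem by auto
  have "i \<noteq> j" using ne m(3) cj(1) by auto
  moreover have "\<bar>snd (c i) - snd (c j)\<bar> < 1 / k" using m hh unfolding t_def by (intro abs_lt) linarith+
  moreover have "\<bar>fst (c i) - fst (c j)\<bar> < 1 / k" using m cj ci lt kk by (intro abs_lt) linarith+
  ultimately show False using not_fat i j(1) by blast
qed

lemma row_right: assumes i: "i < N" and lt: "1 - 2 / k < fst (c i)" shows "fst (c i) = 1 - 1 / k"
proof (rule ccontr)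
  assume ne: "fst (c i) \<noteq> 1 - 1 / k"
  have ci: "0 \<le> fst (c i)" "fst (c i) + 1 / k \<le> 1" "0 \<le> snd (c i)" "snd (c i) + 1 / k \<le> 1"
    using cell_in_square[OF i] by auto
  have kk: "0 < 1 / real k" using kpos by simp
  define hh where "hh = 1 / real k / 2"
  have hh1: "0 < hh" using kk by (simp add: hh_def)
  have hh2: "hh < 1 / real k" using kpos by (simp add: hh_def field_simps)
  note hh = hh1 hh2
  define t where "t = snd (c i) + hh"
  have t2: "1 / (2 * real k) = (1 / k) / 2" by simp
  have k2: "2 / real k = 2 * (1 / k)" by simp
  have t0: "0 \<le> t" using ci hh unfolding t_def by linarith
  have t1: "t \<le> 1" using ci hh unfolding t_def by linarith
  note t01 = t0 t1
  obtain j where j: "j < N" "(1, t) \<in> \<Psi> j ` unit_square" using edges_SS(4)[OF t01] by blast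
  have cj: "0 \<le> fst (c j)" "fst (c j) + 1 / k \<le> 1" "0 \<le> snd (c j)" "snd (c j) + 1 / k \<le> 1"
    using cell_in_square[OF j(1)] by auto
  have m: "snd (c j) \<le> t" "t \<le> snd (c j) + 1 / k" "1 \<le> fst (c j) + 1 / k" using j(2) unfolding cell_mem by auto
  have "i \<noteq> j" using ne m(3) cj(2) by auto
  moreover have "\<bar>snd (c i) - snd (c j)\<bar> < 1 / k" using m hh unfolding t_def by (intro abs_lt) linarith+
  moreover have "\<bar>fst (c i) - fst (c j)\<bar> < 1 / k" using m cj ci lt kk unfolding k2 by (intro abs_lt) linarith+
  ultimately show False using not_fat i j(1) by blast
qed

end



context usc begin

lemma foot_generic:
  fixes h :: "pt \<Rightarrow> real" and f :: "pt \<Rightarrow> pt" and B :: real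
  assumes h0: "\<forall>x\<in>K. 0 \<le> h x"
    and hz: "\<forall>x\<in>K. h x = 0 \<longrightarrow> f x = x"
    and base: "\<forall>x\<in>K. lpc K B x (f x)"
    and stp: "\<forall>x\<in>K. h x < 1 / k \<longrightarrow> (\<exists>i<N. \<exists>y\<in>K. x = \<Psi> i y \<and> h y = k * h x \<and> f x = \<Psi> i (f y))"
  shows "\<forall>x\<in>K. lpc K (B * k * h x) x (f x)"
proof -
  obtain x0 where "x0 \<in> K" using Kne by blast
  then have B0: "0 \<le> B" using base lpc_nonneg by blast
  have kk: "0 < real k" by (rule kpos)
  have big: "lpc K (B * k * h x) x (f x)" if "x \<in> K" "1 / k \<le> h x" for x
  proof (rule lpc_mono[OF base[rule_format, OF that(1)]])
    have "1 \<le> k * h x" using that(2) kk by (simp add: field_simps)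
    then have "B * 1 \<le> B * (k * h x)" using B0 by (rule mult_left_mono)
    then show "B \<le> B * k * h x" by (simp add: mult.assoc)
  qed
  have P: "\<forall>x\<in>K. (1 / real k) ^ n \<le> h x \<longrightarrow> lpc K (B * k * h x) x (f x)" for n
  proof (induction n)
    case 0
    have "1 / real k \<le> 1" using k3 by simp
    then show ?case using big by force
  next
    case (Suc n)
    show ?case
    proof (intro ballI impI)
      fix x assume x: "x \<in> K" "(1 / real k) ^ Suc n \<le> h x"
      show "lpc K (B * k * h x) x (f x)"
      proof (cases "1 / k \<le> h x")
        case True then show ?thesis using big x by blast
      next
        case False
        then obtain i y where iy: "i < N" "y \<in> K" "x = \<Psi> i y" "h y = k * h x" "f x = \<Psi> i (f y)"
          using stp x(1) by force
        have "(1 / real k) ^ n = k * (1 / real k) ^ Suc n" using kk by simp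
        also have "\<dots> \<le> k * h x" using x(2) kk by (intro mult_left_mono) auto
        finally have "(1 / real k) ^ n \<le> h y" using iy(4) by simp
        then have "lpc K (B * k * h y) y (f y)" using Suc iy(2) by blast
        then have "lpc K ((1 / k) * (B * k * h y)) (\<Psi> i y) (\<Psi> i (f y))" by (rule lpc_Psi[OF iy(1)])
        moreover have "(1 / k) * (B * k * h y) = B * k * h x" using iy(4) kk by simp
        ultimately show ?thesis using iy by simp
      qed
    qed
  qed
  show ?thesis
  proof
    fix x assume x: "x \<in> K"
    show "lpc K (B * k * h x) x (f x)"
    proof (cases "h x = 0")
      case True then show ?thesis using hz x lpc_refl by simp
    next
      case False
      then have "0 < h x" using h0 x by force
      moreover have "1 / real k < 1" using k3 by simp
      ultimately obtain n where n: "(1 / real k) ^ n < h x" using real_arch_pow_inv by blast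
      show ?thesis using P[of n] x n less_imp_le by blast
    qed
  qed
qed

lemma Kcoords: assumes "x \<in> K" shows "0 \<le> fst x" "fst x \<le> 1" "0 \<le> snd x" "snd x \<le> 1"
  using K_sub assms by (auto simp: unit_square_def)

lemma Kdecomp: assumes "x \<in> K" obtains i y where "i < N" "y \<in> K" "x = \<Psi> i y"
  using assms Kfix by blast

lemma base_bd:
  assumes D: "\<forall>x\<in>K. lpc K D x o0" and x: "x \<in> K" and p: "p \<in> bd"
  shows "lpc K (D + 2) x p"
  by (rule lpc_trans[OF D[rule_format, OF x] lpc_sym[OF bd_path[OF p]]])

lemma feet:
  assumes D: "\<forall>x\<in>K. lpc K D x o0"
  shows "\<forall>x\<in>K. lpc K ((D + 2) * k * snd x) x (fst x, 0)"
    "\<forall>x\<in>K. lpc K ((D + 2) * k * (1 - snd x)) x (fst x, 1)"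
    "\<forall>x\<in>K. lpc K ((D + 2) * k * fst x) x (0, snd x)"
    "\<forall>x\<in>K. lpc K ((D + 2) * k * (1 - fst x)) x (1, snd x)"
proof -
  have kk: "0 < real k" by (rule kpos)
  show "\<forall>x\<in>K. lpc K ((D + 2) * k * snd x) x (fst x, 0)"
  proof (rule foot_generic[where h = snd and f = "\<lambda>x. (fst x, 0)"])
    show "\<forall>x\<in>K. 0 \<le> snd x" using Kcoords by blast
    show "\<forall>x\<in>K. snd x = 0 \<longrightarrow> (fst x, 0) = x" by auto
    show "\<forall>x\<in>K. lpc K (D + 2) x (fst x, 0)"
      using base_bd[OF D] Kcoords by (auto simp: bd_def unit_square_def)
    show "\<forall>x\<in>K. snd x < 1 / k \<longrightarrow> (\<exists>i<N. \<exists>y\<in>K. x = \<Psi> i y \<and> snd y = k * snd x \<and> (fst x, 0) = \<Psi> i (fst y, 0))"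
    proof (intro ballI impI)
      fix x assume x: "x \<in> K" "snd x < 1 / k"
      obtain i y where iy: "i < N" "y \<in> K" "x = \<Psi> i y" using Kdecomp[OF x(1)] by blast
      have xs: "fst x = fst y / k + fst (c i)" "snd x = snd y / k + snd (c i)" using iy(3) by (auto simp: Psi_eq)
      have "0 \<le> snd y / k" using Kcoords[OF iy(2)] kk by simp
      then have "snd (c i) < 1 / k" using xs x(2) by linarith
      then have c0: "snd (c i) = 0" by (rule row_bot[OF iy(1)])
      have "snd y = k * snd x" using xs(2) c0 kk by simp
      moreover have "(fst x, 0) = \<Psi> i (fst y, 0)" using xs c0 by (simp add: Psi_eq)
      ultimately show "\<exists>i<N. \<exists>y\<in>K. x = \<Psi> i y \<and> snd y = k * snd x \<and> (fst x, 0) = \<Psi> i (fst y, 0)"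
        using iy by blast
    qed
  qed
  show "\<forall>x\<in>K. lpc K ((D + 2) * k * (1 - snd x)) x (fst x, 1)"
  proof (rule foot_generic[where h = "\<lambda>x. 1 - snd x" and f = "\<lambda>x. (fst x, 1)"])
    show "\<forall>x\<in>K. 0 \<le> 1 - snd x" using Kcoords by force
    show "\<forall>x\<in>K. 1 - snd x = 0 \<longrightarrow> (fst x, 1) = x" by (auto simp: prod_eq_iff)
    show "\<forall>x\<in>K. lpc K (D + 2) x (fst x, 1)"
      using base_bd[OF D] Kcoords by (auto simp: bd_def unit_square_def)
    show "\<forall>x\<in>K. 1 - snd x < 1 / k \<longrightarrow> (\<exists>i<N. \<exists>y\<in>K. x = \<Psi> i y \<and> 1 - snd y = k * (1 - snd x) \<and> (fst x, 1) = \<Psi> i (fst y, 1))"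
    proof (intro ballI impI)
      fix x assume x: "x \<in> K" "1 - snd x < 1 / k"
      obtain i y where iy: "i < N" "y \<in> K" "x = \<Psi> i y" using Kdecomp[OF x(1)] by blast
      have xs: "fst x = fst y / k + fst (c i)" "snd x = snd y / k + snd (c i)" using iy(3) by (auto simp: Psi_eq)
      have "snd y / k \<le> 1 / k" using Kcoords[OF iy(2)] kk by (simp add: divide_right_mono)
      then have "1 - 2 / k < snd (c i)" using xs x(2) by (simp add: field_simps) linarith?
      then have c0: "snd (c i) = 1 - 1 / k" by (rule row_top[OF iy(1)])
      have "1 - snd y = k * (1 - snd x)" using xs(2) c0 kk by (simp add: field_simps)
      moreover have "(fst x, 1) = \<Psi> i (fst y, 1)" using xs c0 by (simp add: Psi_eq)
      ultimately show "\<exists>i<N. \<exists>y\<in>K. x = \<Psi> i y \<and> 1 - snd y = k * (1 - snd x) \<and> (fst x, 1) = \<Psi> i (fst y, 1)"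
        using iy by blast
    qed
  qed
  show "\<forall>x\<in>K. lpc K ((D + 2) * k * fst x) x (0, snd x)"
  proof (rule foot_generic[where h = fst and f = "\<lambda>x. (0, snd x)"])
    show "\<forall>x\<in>K. 0 \<le> fst x" using Kcoords by blast
    show "\<forall>x\<in>K. fst x = 0 \<longrightarrow> (0, snd x) = x" by auto
    show "\<forall>x\<in>K. lpc K (D + 2) x (0, snd x)"
      using base_bd[OF D] Kcoords by (auto simp: bd_def unit_square_def)
    show "\<forall>x\<in>K. fst x < 1 / k \<longrightarrow> (\<exists>i<N. \<exists>y\<in>K. x = \<Psi> i y \<and> fst y = k * fst x \<and> (0, snd x) = \<Psi> i (0, snd y))"
    proof (intro ballI impI)
      fix x assume x: "x \<in> K" "fst x < 1 / k"
      obtain i y where iy: "i < N" "y \<in> K" "x = \<Psi> i y" using Kdecomp[OF x(1)] by blast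
      have xs: "fst x = fst y / k + fst (c i)" "snd x = snd y / k + snd (c i)" using iy(3) by (auto simp: Psi_eq)
      have "0 \<le> fst y / k" using Kcoords[OF iy(2)] kk by simp
      then have "fst (c i) < 1 / k" using xs x(2) by linarith
      then have c0: "fst (c i) = 0" by (rule row_left[OF iy(1)])
      have "fst y = k * fst x" using xs(1) c0 kk by simp
      moreover have "(0, snd x) = \<Psi> i (0, snd y)" using xs c0 by (simp add: Psi_eq)
      ultimately show "\<exists>i<N. \<exists>y\<in>K. x = \<Psi> i y \<and> fst y = k * fst x \<and> (0, snd x) = \<Psi> i (0, snd y)"
        using iy by blast
    qed
  qed
  show "\<forall>x\<in>K. lpc K ((D + 2) * k * (1 - fst x)) x (1, snd x)"
  proof (rule foot_generic[where h = "\<lambda>x. 1 - fst x" and f = "\<lambda>x. (1, snd x)"])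
    show "\<forall>x\<in>K. 0 \<le> 1 - fst x" using Kcoords by force
    show "\<forall>x\<in>K. 1 - fst x = 0 \<longrightarrow> (1, snd x) = x" by (auto simp: prod_eq_iff)
    show "\<forall>x\<in>K. lpc K (D + 2) x (1, snd x)"
      using base_bd[OF D] Kcoords by (auto simp: bd_def unit_square_def)
    show "\<forall>x\<in>K. 1 - fst x < 1 / k \<longrightarrow> (\<exists>i<N. \<exists>y\<in>K. x = \<Psi> i y \<and> 1 - fst y = k * (1 - fst x) \<and> (1, snd x) = \<Psi> i (1, snd y))"
    proof (intro ballI impI)
      fix x assume x: "x \<in> K" "1 - fst x < 1 / k"
      obtain i y where iy: "i < N" "y \<in> K" "x = \<Psi> i y" using Kdecomp[OF x(1)] by blast
      have xs: "fst x = fst y / k + fst (c i)" "snd x = snd y / k + snd (c i)" using iy(3) by (auto simp: Psi_eq)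
      have "fst y / k \<le> 1 / k" using Kcoords[OF iy(2)] kk by (simp add: divide_right_mono)
      then have "1 - 2 / k < fst (c i)" using xs x(2) by (simp add: field_simps) linarith?
      then have c0: "fst (c i) = 1 - 1 / k" by (rule row_right[OF iy(1)])
      have "1 - fst y = k * (1 - fst x)" using xs(1) c0 kk by (simp add: field_simps)
      moreover have "(1, snd x) = \<Psi> i (1, snd y)" using xs c0 by (simp add: Psi_eq)
      ultimately show "\<exists>i<N. \<exists>y\<in>K. x = \<Psi> i y \<and> 1 - fst y = k * (1 - fst x) \<and> (1, snd x) = \<Psi> i (1, snd y)"
        using iy by blast
    qed
  qed
qed

end



lemma lin_helper:
  fixes A a b d :: real
  assumes "0 \<le> A" "a \<le> d" "b \<le> d"
  shows "A * a + b \<le> (A + 1) * d"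
proof -
  have "A * a \<le> A * d" using assms by (intro mult_left_mono)
  then show ?thesis using assms by (simp add: algebra_simps)
qed

lemma fst_le_dist: "\<bar>fst x - fst y\<bar> \<le> dist x (y :: pt)"
  using dist_fst_le[of x y] by (simp add: dist_real_def)
lemma snd_le_dist: "\<bar>snd x - snd y\<bar> \<le> dist x (y :: pt)"
  using dist_snd_le[of x y] by (simp add: dist_real_def)

lemma clamp1:
  fixes a b ca cb s :: real
  assumes "ca \<le> a" "a \<le> ca + s" "cb \<le> b" "b \<le> cb + s" "\<bar>ca - cb\<bar> \<le> s"
  defines "p \<equiv> max (max ca cb) (min a (min ca cb + s))"
  shows "ca \<le> p" "p \<le> ca + s" "cb \<le> p" "p \<le> cb + s" "\<bar>a - p\<bar> \<le> \<bar>a - b\<bar>"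
  using assms by (auto simp: p_def max_def min_def abs_if)

lemma dist_coord_mono:
  fixes x p y :: pt
  assumes "\<bar>fst x - fst p\<bar> \<le> \<bar>fst x - fst y\<bar>" "\<bar>snd x - snd p\<bar> \<le> \<bar>snd x - snd y\<bar>"
  shows "dist x p \<le> dist x y"
proof -
  have "(fst x - fst p)\<^sup>2 \<le> (fst x - fst y)\<^sup>2" "(snd x - snd p)\<^sup>2 \<le> (snd x - snd y)\<^sup>2"
    using assms abs_le_square_iff by blast+
  then show ?thesis
    by (simp add: dist_prod_def dist_real_def)
qed

context usc begin

lemma toB:
  assumes D: "\<forall>x\<in>K. lpc K D x o0" and x: "x \<in> K" and p: "p \<in> bd"
  shows "lpc K (((D + 2) * k + 1) * dist x p) x p"
proof -
  have D0: "0 \<le> D" using D x lpc_nonneg by blast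
  have A0: "0 \<le> (D + 2) * real k" using D0 by simp
  note ft = feet[OF D]
  have xc: "0 \<le> fst x" "fst x \<le> 1" "0 \<le> snd x" "snd x \<le> 1" using Kcoords[OF x] by auto
  have pc: "0 \<le> fst p" "fst p \<le> 1" "0 \<le> snd p" "snd p \<le> 1" using p by (auto simp: bd_def unit_square_def)
  have d1: "\<bar>fst x - fst p\<bar> \<le> dist x p" and d2: "\<bar>snd x - snd p\<bar> \<le> dist x p"
    by (rule fst_le_dist, rule snd_le_dist)
  consider "snd p = 0" | "snd p = 1" | "fst p = 0" | "fst p = 1" using p by (auto simp: bd_def)
  then show ?thesis
  proof cases
    case 1
    then have pe: "p = (fst p, 0)" by (simp add: prod_eq_iff)
    have l1: "lpc K ((D + 2) * k * snd x) x (fst x, 0)" using ft(1) x by blast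
    have l2: "lpc K (dist (fst x, 0::real) p) (fst x, 0) p"
      using seg_lpc[OF seg_bd(1)[OF xc(1,2) pc(1,2)]] pe by metis
    have "dist (fst x, 0::real) p = \<bar>fst x - fst p\<bar>" by (subst pe) (simp add: dist_prod_def dist_real_def)
    then have "(D + 2) * k * snd x + dist (fst x, 0::real) p \<le> ((D + 2) * k + 1) * dist x p"
      using lin_helper[OF A0, of "snd x" "dist x p" "\<bar>fst x - fst p\<bar>"] d1 d2 1 xc by simp
    then show ?thesis using lpc_trans[OF l1 l2] lpc_mono by blast
  next
    case 2
    then have pe: "p = (fst p, 1)" by (simp add: prod_eq_iff)
    have l1: "lpc K ((D + 2) * k * (1 - snd x)) x (fst x, 1)" using ft(2) x by blast
    have l2: "lpc K (dist (fst x, 1::real) p) (fst x, 1) p"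
      using seg_lpc[OF seg_bd(2)[OF xc(1,2) pc(1,2)]] pe by metis
    have "dist (fst x, 1::real) p = \<bar>fst x - fst p\<bar>" by (subst pe) (simp add: dist_prod_def dist_real_def)
    moreover have "1 - snd x \<le> dist x p" using d2 2 by simp
    ultimately have "(D + 2) * k * (1 - snd x) + dist (fst x, 1::real) p \<le> ((D + 2) * k + 1) * dist x p"
      using lin_helper[OF A0, of "1 - snd x" "dist x p" "\<bar>fst x - fst p\<bar>"] d1 by simp
    then show ?thesis using lpc_trans[OF l1 l2] lpc_mono by blast
  next
    case 3
    then have pe: "p = (0, snd p)" by (simp add: prod_eq_iff)
    have l1: "lpc K ((D + 2) * k * fst x) x (0, snd x)" using ft(3) x by blast
    have l2: "lpc K (dist (0::real, snd x) p) (0, snd x) p"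
      using seg_lpc[OF seg_bd(3)[OF xc(3,4) pc(3,4)]] pe by metis
    have "dist (0::real, snd x) p = \<bar>snd x - snd p\<bar>" by (subst pe) (simp add: dist_prod_def dist_real_def)
    then have "(D + 2) * k * fst x + dist (0::real, snd x) p \<le> ((D + 2) * k + 1) * dist x p"
      using lin_helper[OF A0, of "fst x" "dist x p" "\<bar>snd x - snd p\<bar>"] d1 d2 3 xc by simp
    then show ?thesis using lpc_trans[OF l1 l2] lpc_mono by blast
  next
    case 4
    then have pe: "p = (1, snd p)" by (simp add: prod_eq_iff)
    have l1: "lpc K ((D + 2) * k * (1 - fst x)) x (1, snd x)" using ft(4) x by blast
    have l2: "lpc K (dist (1::real, snd x) p) (1, snd x) p"
      using seg_lpc[OF seg_bd(4)[OF xc(3,4) pc(3,4)]] pe by metis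
    have "dist (1::real, snd x) p = \<bar>snd x - snd p\<bar>" by (subst pe) (simp add: dist_prod_def dist_real_def)
    moreover have "1 - fst x \<le> dist x p" using d1 4 by simp
    ultimately have "(D + 2) * k * (1 - fst x) + dist (1::real, snd x) p \<le> ((D + 2) * k + 1) * dist x p"
      using lin_helper[OF A0, of "1 - fst x" "dist x p" "\<bar>snd x - snd p\<bar>"] d2 by simp
    then show ?thesis using lpc_trans[OF l1 l2] lpc_mono by blast
  qed
qed

end



context usc begin

lemma in_cell: assumes "i < N" "y \<in> K" shows "\<Psi> i y \<in> \<Psi> i ` unit_square"
  using assms K_sub by blast

lemma gap_exists: "\<exists>g>0. \<forall>i<N. \<forall>j<N. \<Psi> i ` unit_square \<inter> \<Psi> j ` unit_square = {} \<longrightarrow>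
   (\<forall>x\<in>\<Psi> i ` unit_square. \<forall>y\<in>\<Psi> j ` unit_square. g \<le> dist x y)"
proof -
  define P where "P = {(i, j). i < N \<and> j < N \<and> \<Psi> i ` unit_square \<inter> \<Psi> j ` unit_square = {}}"
  define G where "G = insert 1 ((\<lambda>(i, j). max \<bar>fst (c i) - fst (c j)\<bar> \<bar>snd (c i) - snd (c j)\<bar> - 1 / k) ` P)"
  have fP: "finite P" unfolding P_def
    by (rule finite_subset[of _ "{..<N} \<times> {..<N}"]) auto
  have fG: "finite G" "G \<noteq> {}" unfolding G_def using fP by auto
  have pos: "0 < max \<bar>fst (c i) - fst (c j)\<bar> \<bar>snd (c i) - snd (c j)\<bar> - 1 / k" if "(i, j) \<in> P" for i j
  proof (rule ccontr)
    assume "\<not> ?thesis"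
    then have a: "\<bar>fst (c i) - fst (c j)\<bar> \<le> 1 / k" "\<bar>snd (c i) - snd (c j)\<bar> \<le> 1 / k" by auto
    define q where "q = (max (fst (c i)) (fst (c j)), max (snd (c i)) (snd (c j)))"
    have "q \<in> \<Psi> i ` unit_square" "q \<in> \<Psi> j ` unit_square"
      unfolding cell_mem q_def using a by (auto simp: abs_le_iff max_def)
    then show False using that unfolding P_def by blast
  qed
  define g where "g = Min G"
  have g0: "0 < g" unfolding g_def using fG pos by (auto simp: G_def)
  show ?thesis
  proof (intro exI[of _ g] conjI g0 allI impI ballI)
    fix i j x y assume ij: "i < N" "j < N" "\<Psi> i ` unit_square \<inter> \<Psi> j ` unit_square = {}"
      and x: "x \<in> \<Psi> i ` unit_square" and y: "y \<in> \<Psi> j ` unit_square"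
    have "(i, j) \<in> P" using ij unfolding P_def by blast
    then have "g \<le> max \<bar>fst (c i) - fst (c j)\<bar> \<bar>snd (c i) - snd (c j)\<bar> - 1 / k"
      unfolding g_def using fG by (intro Min_le) (auto simp: G_def)
    moreover have "\<bar>fst (c i) - fst (c j)\<bar> - 1 / k \<le> \<bar>fst x - fst y\<bar>"
      "\<bar>snd (c i) - snd (c j)\<bar> - 1 / k \<le> \<bar>snd x - snd y\<bar>"
      using x y unfolding cell_mem by (auto simp: abs_if)
    ultimately show "g \<le> dist x y" using fst_le_dist[of x y] snd_le_dist[of x y] by (auto simp: max_def split: if_splits)
  qed
qed

lemma touch_point:
  assumes x: "x \<in> \<Psi> i ` unit_square" and y: "y \<in> \<Psi> j ` unit_square"
    and ne: "\<Psi> i ` unit_square \<inter> \<Psi> j ` unit_square \<noteq> {}"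
  shows "\<exists>p. p \<in> \<Psi> i ` unit_square \<and> p \<in> \<Psi> j ` unit_square \<and> dist x p \<le> dist x y"
proof -
  obtain q where q: "q \<in> \<Psi> i ` unit_square" "q \<in> \<Psi> j ` unit_square" using ne by blast
  have a1: "\<bar>fst (c i) - fst (c j)\<bar> \<le> 1 / k" and a2: "\<bar>snd (c i) - snd (c j)\<bar> \<le> 1 / k"
    using q unfolding cell_mem by (auto simp: abs_if)
  have xc: "fst (c i) \<le> fst x" "fst x \<le> fst (c i) + 1 / k" "snd (c i) \<le> snd x" "snd x \<le> snd (c i) + 1 / k"
    using x unfolding cell_mem by auto
  have yc: "fst (c j) \<le> fst y" "fst y \<le> fst (c j) + 1 / k" "snd (c j) \<le> snd y" "snd y \<le> snd (c j) + 1 / k"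
    using y unfolding cell_mem by auto
  note c1 = clamp1[OF xc(1,2) yc(1,2) a1]
  note c2 = clamp1[OF xc(3,4) yc(3,4) a2]
  define p where "p = (max (max (fst (c i)) (fst (c j))) (min (fst x) (min (fst (c i)) (fst (c j)) + 1 / k)),
                       max (max (snd (c i)) (snd (c j))) (min (snd x) (min (snd (c i)) (snd (c j)) + 1 / k)))"
  have "p \<in> \<Psi> i ` unit_square" "p \<in> \<Psi> j ` unit_square" unfolding cell_mem p_def using c1 c2 by auto
  moreover have "dist x p \<le> dist x y" by (rule dist_coord_mono) (use c1 c2 in \<open>simp_all add: p_def\<close>)
  ultimately show ?thesis by blast
qed

lemma main_lpc: "\<exists>C>0. \<forall>x\<in>K. \<forall>y\<in>K. lpc K (C * dist x y) x y"
proof -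
  obtain D where D: "\<forall>x\<in>K. lpc K D x o0" using bounded_to_o0 by blast
  have D0: "0 \<le> D" using D Kne lpc_nonneg by blast
  obtain g where g: "g > 0" "\<forall>i<N. \<forall>j<N. \<Psi> i ` unit_square \<inter> \<Psi> j ` unit_square = {} \<longrightarrow>
   (\<forall>x\<in>\<Psi> i ` unit_square. \<forall>y\<in>\<Psi> j ` unit_square. g \<le> dist x y)" using gap_exists by blast
  define CB where "CB = (D + 2) * k + 1"
  have CB0: "0 < CB" unfolding CB_def using D0 by (simp add: add_nonneg_pos)
  define CM where "CM = 3 * CB + 2 * D / g"
  have CM0: "0 < CM" unfolding CM_def using CB0 D0 g(1) by (simp add: add_pos_nonneg)
  have kk: "0 < real k" by (rule kpos)
  have B: "lpc K (CB * dist x p) x p" if "x \<in> K" "p \<in> bd" for x p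
    unfolding CB_def by (rule toB[OF D that])
  have P: "\<forall>x\<in>K. \<forall>y\<in>K. 3 * (1 / real k) ^ n \<le> dist x y \<longrightarrow> lpc K (CM * dist x y) x y" for n
  proof (induction n)
    case 0
    show ?case using K_dist_le2 by force
  next
    case (Suc n)
    show ?case
    proof (intro ballI impI)
      fix x y assume x: "x \<in> K" and y: "y \<in> K" and dxy: "3 * (1 / real k) ^ Suc n \<le> dist x y"
      obtain i x' where ix: "i < N" "x' \<in> K" "x = \<Psi> i x'" using Kdecomp[OF x] by blast
      obtain j y' where jy: "j < N" "y' \<in> K" "y = \<Psi> j y'" using Kdecomp[OF y] by blast
      have xQ: "x \<in> \<Psi> i ` unit_square" using in_cell ix by blast
      have yQ: "y \<in> \<Psi> j ` unit_square" using in_cell jy by blast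
      show "lpc K (CM * dist x y) x y"
      proof (cases "i = j")
        case True
        have dd: "dist x y = (1 / k) * dist x' y'" using ix(3) jy(3) True Psi_dist by simp
        have "3 * (1 / real k) ^ n = k * (3 * (1 / real k) ^ Suc n)" using kk by simp
        also have "\<dots> \<le> k * dist x y" using dxy kk by (intro mult_left_mono) auto
        also have "\<dots> = dist x' y'" using dd kk by simp
        finally have "lpc K (CM * dist x' y') x' y'" using Suc ix(2) jy(2) by blast
        then have "lpc K ((1 / k) * (CM * dist x' y')) (\<Psi> i x') (\<Psi> i y')" by (rule lpc_Psi[OF ix(1)])
        moreover have "(1 / k) * (CM * dist x' y') = CM * dist x y" using dd by simp
        ultimately show ?thesis using ix(3) jy(3) True by simp
      next
        case False
        show ?thesis
        proof (cases "\<Psi> i ` unit_square \<inter> \<Psi> j ` unit_square = {}")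
          case True
          have gd: "g \<le> dist x y" using g(2) ix(1) jy(1) True xQ yQ by blast
          have "lpc K (D + D) x y" by (rule lpc_trans[OF D[rule_format, OF x] lpc_sym[OF D[rule_format, OF y]]])
          moreover have "D + D \<le> CM * dist x y"
          proof -
            have "D + D = (2 * D / g) * g" using g(1) by simp
            also have "\<dots> \<le> (2 * D / g) * dist x y" using gd D0 g(1) by (intro mult_left_mono) auto
            also have "\<dots> \<le> CM * dist x y" unfolding CM_def using CB0 by (intro mult_right_mono) auto
            finally show ?thesis .
          qed
          ultimately show ?thesis by (rule lpc_mono)
        next
          case ne: False
          obtain p where p: "p \<in> \<Psi> i ` unit_square" "p \<in> \<Psi> j ` unit_square" "dist x p \<le> dist x y"
            using touch_point[OF xQ yQ ne] by blast
          obtain w where w: "w \<in> bd" "p = \<Psi> i w" using touch_bd[OF ix(1) jy(1) False p(1,2)] by blast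
          obtain w' where w': "w' \<in> bd" "p = \<Psi> j w'" using touch_bd[OF jy(1) ix(1) _ p(2,1)] False by metis
          have "lpc K ((1 / k) * (CB * dist x' w)) (\<Psi> i x') (\<Psi> i w)" by (rule lpc_Psi[OF ix(1) B[OF ix(2) w(1)]])
          moreover have "(1 / k) * (CB * dist x' w) = CB * dist x p" using ix(3) w(2) Psi_dist by simp
          ultimately have l1: "lpc K (CB * dist x p) x p" using ix(3) w(2) by simp
          have "lpc K ((1 / k) * (CB * dist y' w')) (\<Psi> j y') (\<Psi> j w')" by (rule lpc_Psi[OF jy(1) B[OF jy(2) w'(1)]])
          moreover have "(1 / k) * (CB * dist y' w') = CB * dist y p" using jy(3) w'(2) Psi_dist by simp
          ultimately have l2: "lpc K (CB * dist y p) y p" using jy(3) w'(2) by simp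
          have l: "lpc K (CB * dist x p + CB * dist y p) x y" by (rule lpc_trans[OF l1 lpc_sym[OF l2]])
          have "dist y p \<le> dist y x + dist x p" by (rule dist_triangle)
          then have "dist x p + dist y p \<le> 3 * dist x y" using p(3) by (simp add: dist_commute)
          then have "CB * (dist x p + dist y p) \<le> CB * (3 * dist x y)" using CB0 by (intro mult_left_mono) auto
          moreover have "CB * (3 * dist x y) \<le> CM * dist x y"
          proof -
            have "3 * CB \<le> CM" unfolding CM_def using D0 g(1) by simp
            then have "(3 * CB) * dist x y \<le> CM * dist x y" by (intro mult_right_mono) auto
            then show ?thesis by (simp add: mult.assoc mult.left_commute)
          qed
          ultimately have "CB * dist x p + CB * dist y p \<le> CM * dist x y" by (simp add: distrib_left)
          then show ?thesis using l lpc_mono by blast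
        qed
      qed
    qed
  qed
  have "\<forall>x\<in>K. \<forall>y\<in>K. lpc K (CM * dist x y) x y"
  proof (intro ballI)
    fix x y assume x: "x \<in> K" and y: "y \<in> K"
    show "lpc K (CM * dist x y) x y"
    proof (cases "x = y")
      case True then show ?thesis using lpc_refl[OF x] by simp
    next
      case False
      then have "0 < dist x y / 3" by simp
      moreover have "1 / real k < 1" using k3 by simp
      ultimately obtain n where "(1 / real k) ^ n < dist x y / 3" using real_arch_pow_inv by blast
      then have "3 * (1 / real k) ^ n \<le> dist x y" by simp
      then show ?thesis using P x y by blast
    qed
  qed
  then show ?thesis using CM0 by blast
qed

end

theorem lemma5p1:
  fixes k N :: nat and c :: "nat \<Rightarrow> real \<times> real" and K :: "(real \<times> real) set"
  assumes "USC k N c K"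
  shows "\<exists>C::real. 0 < C \<and>
           (\<forall>x\<in>K. \<forall>y\<in>K. ereal (dist x y) \<le> geodesic_dist K x y \<and>
                          geodesic_dist K x y \<le> ereal (C * dist x y))"
proof -
  interpret usc k N c K by (rule usc.intro[OF assms])
  obtain C where C: "0 < C" "\<forall>x\<in>K. \<forall>y\<in>K. lpc K (C * dist x y) x y" using main_lpc by blast
  show ?thesis
  proof (intro exI[of _ C] conjI C(1) ballI)
    fix x y assume "x \<in> K" "y \<in> K"
    show "ereal (dist x y) \<le> geodesic_dist K x y" by (rule geo_lower)
    show "geodesic_dist K x y \<le> ereal (C * dist x y)" using C(2) \<open>x \<in> K\<close> \<open>y \<in> K\<close> LP_geo by blast
  qed
qed



end
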